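(* Let $\mathcal H$ be a separable complex Hilbert space with canonical orthonormal basis $\{e_n\}$ and $S_2$ the Hilbert–Schmidt operators with $\langle\eta,\tau\rangle_2=\operatorname{tr}(\eta^*\tau)$. For a non-negative operator $A\in\mathcal B(S_2)$ there exists a family of selfadjoint operators $\{a_{nm}\}_{n,m\in\mathbb N}\subset\mathcal B(\mathcal H)$ such that $$A\eta=\sum_{n,m}\hat\varepsilon_{nm}\eta\,a_{nm},\qquad \eta\in S_2,$$ where $a_{nn}\ge0$ for all $n$. Moreover, the $a_{nn}$ are positive (resp. positive definite) if $A$ is positive (resp. positive definite), with greatest lower bounds $m_{a_{nn}}\ge m_A$ for all $n\in\mathbb N$.
   Context: $\varepsilon_{nm}=|e_n\rangle\langle e_m|$ (so $\varepsilon_{nm}f=\langle e_m,f\rangle e_n$) and $\hat\varepsilon_{nm}=\frac{1+i}{2}\varepsilon_{nm}+\frac{1-i}{2}\varepsilon_{mn}$ (selfadjoint; $\hat\varepsilon_{nn}=\varepsilon_{nn}$). Inner products are anti-linear in the left argument. For a selfadjoint bounded operator $T$ on a Hilbert space, $m_T=\inf\{\langle x,Tx\rangle:\|x\|=1\}$ is its greatest lower bound; $T\ge0$ if $\langle x,Tx\rangle\ge 0$ for all $x$, positive if $\langle x,Tx\rangle>0$ for $x\ne0$, positive definite if $m_T>0$. *)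

theory Defs
  imports "HOL-Analysis.Analysis"
begin

text \<open>The separable Hilbert space H is realised concretely as l2(nat) of complex
sequences, with canonical orthonormal basis e n.  Bounded operators on H are
functions on sequences that are bounded linear on l2 and (canonical
representative) vanish outside l2, so equality of operators is plain equality.\<close>

definition ell2 :: "(nat \<Rightarrow> complex) set" where
  "ell2 = {x. summable (\<lambda>n. (cmod (x n))\<^sup>2)}"

definition l2inner :: "(nat \<Rightarrow> complex) \<Rightarrow> (nat \<Rightarrow> complex) \<Rightarrow> complex" where
  "l2inner x y = (\<Sum>n. cnj (x n) * y n)"

definition l2norm :: "(nat \<Rightarrow> complex) \<Rightarrow> real" where
  "l2norm x = sqrt (\<Sum>n. (cmod (x n))\<^sup>2)"

definition basis_e :: "nat \<Rightarrow> (nat \<Rightarrow> complex)" where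
  "basis_e n = (\<lambda>k. if k = n then 1 else 0)"

type_synonym hop = "(nat \<Rightarrow> complex) \<Rightarrow> (nat \<Rightarrow> complex)"

definition bounded_op :: "hop \<Rightarrow> bool" where
  "bounded_op T \<longleftrightarrow>
     (\<forall>x. x \<notin> ell2 \<longrightarrow> T x = (\<lambda>_. 0)) \<and>
     (\<forall>x\<in>ell2. T x \<in> ell2) \<and>
     (\<forall>x\<in>ell2. \<forall>y\<in>ell2. T (\<lambda>k. x k + y k) = (\<lambda>k. T x k + T y k)) \<and>
     (\<forall>x\<in>ell2. \<forall>c. T (\<lambda>k. c * x k) = (\<lambda>k. c * T x k)) \<and>
     (\<exists>C. \<forall>x\<in>ell2. l2norm (T x) \<le> C * l2norm x)"

definition selfadjoint_op :: "hop \<Rightarrow> bool" where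
  "selfadjoint_op T \<longleftrightarrow> (\<forall>x\<in>ell2. \<forall>y\<in>ell2. l2inner x (T y) = l2inner (T x) y)"

definition nonneg_op :: "hop \<Rightarrow> bool" where
  "nonneg_op T \<longleftrightarrow> (\<forall>x\<in>ell2. Im (l2inner x (T x)) = 0 \<and> 0 \<le> Re (l2inner x (T x)))"

definition positive_op :: "hop \<Rightarrow> bool" where
  "positive_op T \<longleftrightarrow> (\<forall>x\<in>ell2. x \<noteq> (\<lambda>_. 0) \<longrightarrow>
      Im (l2inner x (T x)) = 0 \<and> 0 < Re (l2inner x (T x)))"

definition glb_op :: "hop \<Rightarrow> real" where
  "glb_op T = Inf ((\<lambda>x. Re (l2inner x (T x))) ` {x \<in> ell2. l2norm x = 1})"

definition posdef_op :: "hop \<Rightarrow> bool" where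
  "posdef_op T \<longleftrightarrow> glb_op T > 0"

definition eps :: "nat \<Rightarrow> nat \<Rightarrow> hop" where
  "eps n m x = (if x \<in> ell2 then (\<lambda>k. l2inner (basis_e m) x * basis_e n k) else (\<lambda>_. 0))"

definition epshat :: "nat \<Rightarrow> nat \<Rightarrow> hop" where
  "epshat n m x = (\<lambda>k. (1 + \<i>) / 2 * eps n m x k + (1 - \<i>) / 2 * eps m n x k)"

text \<open>Hilbert--Schmidt operators S_2 with <eta,tau>_2 = tr(eta^* tau) = sum_n <eta e_n, tau e_n>.\<close>
definition S2 :: "hop set" where
  "S2 = {T. bounded_op T \<and> summable (\<lambda>n. (l2norm (T (basis_e n)))\<^sup>2)}"

definition hs_inner :: "hop \<Rightarrow> hop \<Rightarrow> complex" where
  "hs_inner \<eta> \<tau> = (\<Sum>n. l2inner (\<eta> (basis_e n)) (\<tau> (basis_e n)))"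

definition hs_norm :: "hop \<Rightarrow> real" where
  "hs_norm \<eta> = sqrt (\<Sum>n. (l2norm (\<eta> (basis_e n)))\<^sup>2)"

type_synonym sop = "hop \<Rightarrow> hop"

text \<open>Bounded operators on S_2 (only their values on S_2 matter).\<close>
definition bounded_S2 :: "sop \<Rightarrow> bool" where
  "bounded_S2 A \<longleftrightarrow>
     (\<forall>\<eta>\<in>S2. A \<eta> \<in> S2) \<and>
     (\<forall>\<eta>\<in>S2. \<forall>\<tau>\<in>S2. A (\<lambda>x k. \<eta> x k + \<tau> x k) = (\<lambda>x k. A \<eta> x k + A \<tau> x k)) \<and>
     (\<forall>\<eta>\<in>S2. \<forall>c. A (\<lambda>x k. c * \<eta> x k) = (\<lambda>x k. c * A \<eta> x k)) \<and>
     (\<exists>C. \<forall>\<eta>\<in>S2. hs_norm (A \<eta>) \<le> C * hs_norm \<eta>)"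

definition nonneg_S2 :: "sop \<Rightarrow> bool" where
  "nonneg_S2 A \<longleftrightarrow> (\<forall>\<eta>\<in>S2. Im (hs_inner \<eta> (A \<eta>)) = 0 \<and> 0 \<le> Re (hs_inner \<eta> (A \<eta>)))"

definition positive_S2 :: "sop \<Rightarrow> bool" where
  "positive_S2 A \<longleftrightarrow> (\<forall>\<eta>\<in>S2. \<eta> \<noteq> (\<lambda>_ _. 0) \<longrightarrow>
      Im (hs_inner \<eta> (A \<eta>)) = 0 \<and> 0 < Re (hs_inner \<eta> (A \<eta>)))"

definition glb_S2 :: "sop \<Rightarrow> real" where
  "glb_S2 A = Inf ((\<lambda>\<eta>. Re (hs_inner \<eta> (A \<eta>))) ` {\<eta> \<in> S2. hs_norm \<eta> = 1})"

definition posdef_S2 :: "sop \<Rightarrow> bool" where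
  "posdef_S2 A \<longleftrightarrow> glb_S2 A > 0"

end

theory Submission
  imports Defs
begin


lemma CS_real:
  fixes f g :: "nat \<Rightarrow> real"
  assumes "summable (\<lambda>k. (f k)\<^sup>2)" "summable (\<lambda>k. (g k)\<^sup>2)"
  shows "summable (\<lambda>k. \<bar>f k\<bar> * \<bar>g k\<bar>) \<and>
         (\<Sum>k. \<bar>f k\<bar> * \<bar>g k\<bar>) \<le> sqrt (\<Sum>k. (f k)\<^sup>2) * sqrt (\<Sum>k. (g k)\<^sup>2)"
proof -
  have le: "\<bar>f k\<bar> * \<bar>g k\<bar> \<le> ((f k)\<^sup>2 + (g k)\<^sup>2) / 2" for k
  proof -
    have "0 \<le> (\<bar>f k\<bar> - \<bar>g k\<bar>)\<^sup>2" by simp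
    then have "0 \<le> \<bar>f k\<bar>\<^sup>2 - 2 * (\<bar>f k\<bar> * \<bar>g k\<bar>) + \<bar>g k\<bar>\<^sup>2"
      by (simp add: power2_diff)
    then show ?thesis by simp
  qed
  have s: "summable (\<lambda>k. \<bar>f k\<bar> * \<bar>g k\<bar>)"
    apply (rule summable_comparison_test[where g="\<lambda>k. ((f k)\<^sup>2 + (g k)\<^sup>2) / 2"])
    using le assms by (auto intro!: summable_divide summable_add)
  have "(\<Sum>i<n. \<bar>f i\<bar> * \<bar>g i\<bar>) \<le> sqrt (\<Sum>k. (f k)\<^sup>2) * sqrt (\<Sum>k. (g k)\<^sup>2)" for n
  proof -
    have "(\<Sum>i<n. \<bar>f i\<bar> * \<bar>g i\<bar>) \<le> L2_set f {..<n} * L2_set g {..<n}"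
      by (rule L2_set_mult_ineq)
    also have "\<dots> \<le> sqrt (\<Sum>k. (f k)\<^sup>2) * sqrt (\<Sum>k. (g k)\<^sup>2)"
      unfolding L2_set_def
      by (intro mult_mono real_sqrt_le_mono sum_le_suminf assms) (auto intro: suminf_nonneg sum_nonneg assms)
    finally show ?thesis .
  qed
  then show ?thesis using s suminf_le_const by blast
qed

lemma MINK:
  fixes f g h :: "nat \<Rightarrow> real"
  assumes "summable (\<lambda>k. (f k)\<^sup>2)" "summable (\<lambda>k. (g k)\<^sup>2)"
    and "\<And>k. \<bar>h k\<bar> \<le> \<bar>f k\<bar> + \<bar>g k\<bar>"
  shows "summable (\<lambda>k. (h k)\<^sup>2) \<and>
         sqrt (\<Sum>k. (h k)\<^sup>2) \<le> sqrt (\<Sum>k. (f k)\<^sup>2) + sqrt (\<Sum>k. (g k)\<^sup>2)"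
proof -
  note cs = CS_real[OF assms(1,2)]
  have le: "(h k)\<^sup>2 \<le> (f k)\<^sup>2 + 2 * (\<bar>f k\<bar> * \<bar>g k\<bar>) + (g k)\<^sup>2" for k
  proof -
    have "(h k)\<^sup>2 = \<bar>h k\<bar>\<^sup>2" by simp
    also have "\<dots> \<le> (\<bar>f k\<bar> + \<bar>g k\<bar>)\<^sup>2" using assms(3)[of k]
      by (intro power_mono) auto
    also have "\<dots> = (f k)\<^sup>2 + 2 * (\<bar>f k\<bar> * \<bar>g k\<bar>) + (g k)\<^sup>2"
      by (simp add: power2_eq_square algebra_simps)
    finally show ?thesis .
  qed
  have s2: "summable (\<lambda>k. (f k)\<^sup>2 + 2 * (\<bar>f k\<bar> * \<bar>g k\<bar>) + (g k)\<^sup>2)"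
    using assms cs by (intro summable_add summable_mult) auto
  have s: "summable (\<lambda>k. (h k)\<^sup>2)"
    by (rule summable_comparison_test[OF _ s2]) (use le in auto)
  have "(\<Sum>k. (h k)\<^sup>2) \<le> (\<Sum>k. (f k)\<^sup>2 + 2 * (\<bar>f k\<bar> * \<bar>g k\<bar>) + (g k)\<^sup>2)"
    by (rule suminf_le[OF le s s2])
  also have "\<dots> = (\<Sum>k. (f k)\<^sup>2) + 2 * (\<Sum>k. \<bar>f k\<bar> * \<bar>g k\<bar>) + (\<Sum>k. (g k)\<^sup>2)"
  proof -
    have s1: "summable (\<lambda>k. 2 * (\<bar>f k\<bar> * \<bar>g k\<bar>))" using cs by (intro summable_mult) auto
    have "(\<Sum>k. (f k)\<^sup>2 + 2 * (\<bar>f k\<bar> * \<bar>g k\<bar>) + (g k)\<^sup>2) =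
       (\<Sum>k. (f k)\<^sup>2 + 2 * (\<bar>f k\<bar> * \<bar>g k\<bar>)) + (\<Sum>k. (g k)\<^sup>2)"
      by (rule suminf_add[symmetric]) (use assms s1 in \<open>auto intro: summable_add\<close>)
    also have "(\<Sum>k. (f k)\<^sup>2 + 2 * (\<bar>f k\<bar> * \<bar>g k\<bar>)) = (\<Sum>k. (f k)\<^sup>2) + (\<Sum>k. 2 * (\<bar>f k\<bar> * \<bar>g k\<bar>))"
      by (rule suminf_add[symmetric]) (use assms s1 in auto)
    also have "(\<Sum>k. 2 * (\<bar>f k\<bar> * \<bar>g k\<bar>)) = 2 * (\<Sum>k. \<bar>f k\<bar> * \<bar>g k\<bar>)"
      using cs by (intro suminf_mult) auto
    finally show ?thesis .
  qed
  also have "\<dots> \<le> (sqrt (\<Sum>k. (f k)\<^sup>2) + sqrt (\<Sum>k. (g k)\<^sup>2))\<^sup>2"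
  proof -
    have a: "0 \<le> (\<Sum>k. (f k)\<^sup>2)" "0 \<le> (\<Sum>k. (g k)\<^sup>2)"
      using assms by (auto intro: suminf_nonneg)
    have "(sqrt (\<Sum>k. (f k)\<^sup>2) + sqrt (\<Sum>k. (g k)\<^sup>2))\<^sup>2 =
      (\<Sum>k. (f k)\<^sup>2) + 2 * (sqrt (\<Sum>k. (f k)\<^sup>2) * sqrt (\<Sum>k. (g k)\<^sup>2)) + (\<Sum>k. (g k)\<^sup>2)"
      using a by (simp add: power2_sum)
    then show ?thesis using cs by linarith
  qed
  finally have "sqrt (\<Sum>k. (h k)\<^sup>2) \<le> sqrt ((sqrt (\<Sum>k. (f k)\<^sup>2) + sqrt (\<Sum>k. (g k)\<^sup>2))\<^sup>2)"
    by (rule real_sqrt_le_mono)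
  also have "\<dots> = sqrt (\<Sum>k. (f k)\<^sup>2) + sqrt (\<Sum>k. (g k)\<^sup>2)"
    using suminf_nonneg[OF assms(1)] suminf_nonneg[OF assms(2)] by simp
  finally show ?thesis using s by blast
qed



lemma ell2_iff: "x \<in> ell2 \<longleftrightarrow> summable (\<lambda>n. (cmod (x n))\<^sup>2)"
  by (simp add: ell2_def)

lemma l2norm_nonneg: "x \<in> ell2 \<Longrightarrow> 0 \<le> l2norm x"
  unfolding l2norm_def ell2_iff by (auto intro: suminf_nonneg)

lemma l2norm_sq: "x \<in> ell2 \<Longrightarrow> (l2norm x)\<^sup>2 = (\<Sum>n. (cmod (x n))\<^sup>2)"
  unfolding l2norm_def ell2_iff by (auto intro: suminf_nonneg)

lemma ell2_add: assumes "x \<in> ell2" "y \<in> ell2"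
  shows "(\<lambda>k. x k + y k) \<in> ell2 \<and> l2norm (\<lambda>k. x k + y k) \<le> l2norm x + l2norm y"
  using MINK[of "\<lambda>k. cmod (x k)" "\<lambda>k. cmod (y k)" "\<lambda>k. cmod (x k + y k)"] assms
  by (auto simp: ell2_iff l2norm_def norm_triangle_ineq)

lemma ell2_diff: assumes "x \<in> ell2" "y \<in> ell2"
  shows "(\<lambda>k. x k - y k) \<in> ell2 \<and> l2norm (\<lambda>k. x k - y k) \<le> l2norm x + l2norm y"
  using MINK[of "\<lambda>k. cmod (x k)" "\<lambda>k. cmod (y k)" "\<lambda>k. cmod (x k - y k)"] assms
  by (auto simp: ell2_iff l2norm_def norm_triangle_ineq4)

lemma ell2_smult: assumes "x \<in> ell2"
  shows "(\<lambda>k. c * x k) \<in> ell2 \<and> l2norm (\<lambda>k. c * x k) = cmod c * l2norm x"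
proof -
  have e: "(cmod (c * x k))\<^sup>2 = (cmod c)\<^sup>2 * (cmod (x k))\<^sup>2" for k
    by (simp add: norm_mult power_mult_distrib)
  have s: "summable (\<lambda>k. (cmod (x k))\<^sup>2)" using assms by (simp add: ell2_iff)
  show ?thesis unfolding ell2_iff l2norm_def e
    using s by (simp add: suminf_mult real_sqrt_mult summable_mult)
qed

lemma ell2_comp_le: assumes "x \<in> ell2" shows "cmod (x j) \<le> l2norm x"
proof -
  have s: "summable (\<lambda>k. (cmod (x k))\<^sup>2)" using assms by (simp add: ell2_iff)
  have "(\<Sum>k\<in>{j}. (cmod (x k))\<^sup>2) \<le> (\<Sum>k. (cmod (x k))\<^sup>2)"
    by (rule sum_le_suminf[OF s]) auto
  then show ?thesis unfolding l2norm_def by (simp add: real_le_rsqrt)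
qed

definition trunc :: "nat \<Rightarrow> (nat \<Rightarrow> complex) \<Rightarrow> (nat \<Rightarrow> complex)" where
  "trunc K v = (\<lambda>k. if k < K then v k else 0)"

lemma trunc_ell2: "trunc K v \<in> ell2 \<and> (l2norm (trunc K v))\<^sup>2 = (\<Sum>k<K. (cmod (v k))\<^sup>2)"
proof -
  have e: "(\<lambda>k. (cmod (trunc K v k))\<^sup>2) = (\<lambda>k. if k \<in> {..<K} then (cmod (v k))\<^sup>2 else 0)"
    by (auto simp: trunc_def)
  have "(\<lambda>k. (cmod (trunc K v k))\<^sup>2) sums (\<Sum>k<K. (cmod (v k))\<^sup>2)"
    unfolding e by (rule sums_If_finite_set) auto
  then show ?thesis
    by (auto simp: ell2_iff l2norm_def sums_iff intro!: sum_nonneg)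
qed

lemma trunc_le: assumes "v \<in> ell2" shows "l2norm (trunc K v) \<le> l2norm v"
proof -
  have s: "summable (\<lambda>k. (cmod (v k))\<^sup>2)" using assms by (simp add: ell2_iff)
  have "(l2norm (trunc K v))\<^sup>2 \<le> (l2norm v)\<^sup>2"
    using trunc_ell2[of K v] l2norm_sq[OF assms] sum_le_suminf[OF s, of "{..<K}"] by simp
  then show ?thesis using l2norm_nonneg[OF assms] by (simp add: power2_le_iff_abs_le)
qed

lemma tail_tendsto: assumes "v \<in> ell2"
  shows "(\<lambda>K. l2norm (\<lambda>k. trunc K v k - v k)) \<longlonglongrightarrow> 0"
proof -
  define f where "f k = (cmod (v k))\<^sup>2" for k
  have s: "summable f" using assms by (simp add: ell2_iff f_def[abs_def])
  have sq: "(\<lambda>k. (cmod (trunc K v k - v k))\<^sup>2) sums (suminf f - (\<Sum>k<K. f k))" for K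
  proof -
    have "(\<lambda>k. f k - (if k \<in> {..<K} then f k else 0)) sums (suminf f - (\<Sum>k<K. f k))"
      by (intro sums_diff summable_sums s sums_If_finite_set) auto
    moreover have "(\<lambda>k. f k - (if k \<in> {..<K} then f k else 0)) = (\<lambda>k. (cmod (trunc K v k - v k))\<^sup>2)"
      by (auto simp: trunc_def f_def)
    ultimately show ?thesis by simp
  qed
  have "(\<lambda>K. suminf f - (\<Sum>k<K. f k)) \<longlonglongrightarrow> suminf f - suminf f"
    by (intro tendsto_diff tendsto_const summable_LIMSEQ s)
  then have "(\<lambda>K. sqrt (suminf f - (\<Sum>k<K. f k))) \<longlonglongrightarrow> sqrt 0"
    by (intro tendsto_real_sqrt) simp
  moreover have "l2norm (\<lambda>k. trunc K v k - v k) = sqrt (suminf f - (\<Sum>k<K. f k))" for K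
    using sq[of K] by (simp add: l2norm_def sums_iff)
  ultimately show ?thesis by simp
qed

lemma sbasis: "(\<lambda>k. c * basis_e n k) \<in> ell2 \<and> l2norm (\<lambda>k. c * basis_e n k) = cmod c"
proof -
  have e: "(\<lambda>k. (cmod (c * basis_e n k))\<^sup>2) = (\<lambda>k. if k = n then (cmod c)\<^sup>2 else 0)"
    by (auto simp: basis_e_def)
  have "(\<lambda>k. (cmod (c * basis_e n k))\<^sup>2) sums (cmod c)\<^sup>2"
    unfolding e using sums_single[of n "\<lambda>_. (cmod c)\<^sup>2"] by simp
  then show ?thesis by (auto simp: ell2_iff l2norm_def sums_iff)
qed

lemma basis_ell2: "basis_e n \<in> ell2" "l2norm (basis_e n) = 1"
  using sbasis[of 1 n] by auto

lemma l2inner_sbasis: "l2inner (\<lambda>k. c * basis_e n k) v = cnj c * v n"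
proof -
  have e: "(\<lambda>k. cnj (c * basis_e n k) * v k) = (\<lambda>k. if k = n then cnj c * v n else 0)"
    by (auto simp: basis_e_def)
  show ?thesis unfolding l2inner_def e using sums_single[of n "\<lambda>_. cnj c * v n"]
    by (simp add: sums_iff)
qed

lemma l2inner_basis: "l2inner (basis_e m) z = z m"
  using l2inner_sbasis[of 1 m z] by simp

lemma CS: assumes "x \<in> ell2" "y \<in> ell2"
  shows "summable (\<lambda>n. cnj (x n) * y n) \<and> cmod (l2inner x y) \<le> l2norm x * l2norm y"
proof -
  note c = CS_real[of "\<lambda>n. cmod (x n)" "\<lambda>n. cmod (y n)"]
  have n: "norm (cnj (x n) * y n) = \<bar>cmod (x n)\<bar> * \<bar>cmod (y n)\<bar>" for n
    by (simp add: norm_mult)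
  have s: "summable (\<lambda>n. norm (cnj (x n) * y n))" unfolding n using c assms by (auto simp: ell2_iff)
  have "cmod (l2inner x y) \<le> (\<Sum>n. norm (cnj (x n) * y n))"
    unfolding l2inner_def by (rule summable_norm[OF s])
  also have "\<dots> \<le> l2norm x * l2norm y" unfolding n l2norm_def using c assms by (auto simp: ell2_iff)
  finally show ?thesis using summable_norm_cancel[OF s] by blast
qed

lemma l2inner_sums: "x \<in> ell2 \<Longrightarrow> y \<in> ell2 \<Longrightarrow> (\<lambda>n. cnj (x n) * y n) sums l2inner x y"
  using CS[of x y] by (simp add: l2inner_def summable_sums)

lemma l2inner_add2: assumes "x \<in> ell2" "y \<in> ell2" "z \<in> ell2" shows
   "l2inner x (\<lambda>k. y k + z k) = l2inner x y + l2inner x z"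
proof -
  have "(\<lambda>n. cnj (x n) * (y n + z n)) sums (l2inner x y + l2inner x z)"
    using sums_add[OF l2inner_sums[of x y] l2inner_sums[of x z]] assms by (simp add: distrib_left)
  then show ?thesis by (simp add: l2inner_def[of x "\<lambda>k. y k + z k"] sums_iff)
qed

lemma l2inner_smult2: assumes "x \<in> ell2" "y \<in> ell2" shows "l2inner x (\<lambda>k. c * y k) = c * l2inner x y"
proof -
  have "(\<lambda>n. cnj (x n) * (c * y n)) sums (c * l2inner x y)"
  proof -
    have e: "(\<lambda>n. c * (cnj (x n) * y n)) = (\<lambda>n. cnj (x n) * (c * y n))"
      by (rule ext) (rule mult.left_commute)
    show ?thesis using sums_mult[OF l2inner_sums[OF assms], of c] unfolding e .
  qed
  then show ?thesis by (simp add: l2inner_def[of x "\<lambda>k. c * y k"] sums_iff)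
qed

lemma l2inner_add1: assumes "x \<in> ell2" "y \<in> ell2" "z \<in> ell2" shows
   "l2inner (\<lambda>k. x k + y k) z = l2inner x z + l2inner y z"
proof -
  have "(\<lambda>n. cnj (x n + y n) * z n) sums (l2inner x z + l2inner y z)"
    using sums_add[OF l2inner_sums[of x z] l2inner_sums[of y z]] assms by (simp add: distrib_right)
  then show ?thesis by (simp add: l2inner_def[of "\<lambda>k. x k + y k"] sums_iff)
qed

lemma l2inner_smult1: assumes "x \<in> ell2" "y \<in> ell2" shows "l2inner (\<lambda>k. c * x k) y = cnj c * l2inner x y"
proof -
  have "(\<lambda>n. cnj (c * x n) * y n) sums (cnj c * l2inner x y)"
  proof -
    have e: "(\<lambda>n. cnj c * (cnj (x n) * y n)) = (\<lambda>n. cnj (c * x n) * y n)"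
      by (rule ext) (simp add: mult.assoc)
    show ?thesis using sums_mult[OF l2inner_sums[OF assms], of "cnj c"] unfolding e .
  qed
  then show ?thesis by (simp add: l2inner_def[of "\<lambda>k. c * x k"] sums_iff)
qed

lemma l2inner_cnj: "x \<in> ell2 \<Longrightarrow> y \<in> ell2 \<Longrightarrow> l2inner y x = cnj (l2inner x y)"
proof -
  assume a: "x \<in> ell2" "y \<in> ell2"
  have 1: "(\<lambda>n. cnj (cnj (x n) * y n)) sums cnj (l2inner x y)"
    using l2inner_sums[OF a] by (rule sums_cnj[THEN iffD2])
  have e: "(\<lambda>n. cnj (cnj (x n) * y n)) = (\<lambda>n. cnj (y n) * x n)"
    by (rule ext) (simp add: mult.commute)
  have "(\<lambda>n. cnj (y n) * x n) sums cnj (l2inner x y)" using 1 unfolding e .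
  then show ?thesis unfolding l2inner_def[of y x] by (rule sums_unique[symmetric])
qed



lemma zero_ell2: "(\<lambda>_. 0) \<in> ell2" by (simp add: ell2_iff)

lemma bop_out: "bounded_op T \<Longrightarrow> x \<notin> ell2 \<Longrightarrow> T x = (\<lambda>_. 0)"
  by (simp add: bounded_op_def)

lemma bop_ell2: "bounded_op T \<Longrightarrow> T x \<in> ell2"
  by (cases "x \<in> ell2") (auto simp: bounded_op_def zero_ell2)

lemma bop_add: "bounded_op T \<Longrightarrow> x \<in> ell2 \<Longrightarrow> y \<in> ell2 \<Longrightarrow> T (\<lambda>k. x k + y k) = (\<lambda>k. T x k + T y k)"
  by (simp add: bounded_op_def)

lemma bop_smult: "bounded_op T \<Longrightarrow> x \<in> ell2 \<Longrightarrow> T (\<lambda>k. c * x k) = (\<lambda>k. c * T x k)"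
  by (simp add: bounded_op_def)

lemma bop_bound: "bounded_op T \<Longrightarrow> \<exists>C\<ge>0. \<forall>x\<in>ell2. l2norm (T x) \<le> C * l2norm x"
proof -
  assume "bounded_op T"
  then obtain C where C: "\<forall>x\<in>ell2. l2norm (T x) \<le> C * l2norm x" by (auto simp: bounded_op_def)
  have "\<forall>x\<in>ell2. l2norm (T x) \<le> max C 0 * l2norm x"
  proof
    fix x assume x: "x \<in> ell2"
    have "C * l2norm x \<le> max C 0 * l2norm x" using l2norm_nonneg[OF x] by (intro mult_right_mono) auto
    then show "l2norm (T x) \<le> max C 0 * l2norm x" using C x by force
  qed
  then show ?thesis by (intro exI[of _ "max C 0"]) auto
qed

lemma bop_zero: "bounded_op T \<Longrightarrow> T (\<lambda>_. 0) = (\<lambda>_. 0)"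
  using bop_smult[of T "\<lambda>_. 0" 0] zero_ell2 by simp

lemma bop_diff: assumes "bounded_op T" "x \<in> ell2" "y \<in> ell2"
  shows "T (\<lambda>k. x k - y k) = (\<lambda>k. T x k - T y k)"
proof -
  have y: "(\<lambda>k. (-1) * y k) \<in> ell2" using ell2_smult[OF assms(3)] by blast
  have "T (\<lambda>k. x k - y k) = T (\<lambda>k. x k + (\<lambda>k. (-1) * y k) k)" by simp
  also have "\<dots> = (\<lambda>k. T x k + T (\<lambda>k. (-1) * y k) k)" by (rule bop_add[OF assms(1,2) y])
  also have "\<dots> = (\<lambda>k. T x k - T y k)" using bop_smult[OF assms(1,3), of "-1"] by simp
  finally show ?thesis .
qed

lemma ell2_sum: "finite L \<Longrightarrow> (\<forall>l\<in>L. v l \<in> ell2) \<Longrightarrow> (\<lambda>k. \<Sum>l\<in>L. c l * v l k) \<in> ell2"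
proof (induction L rule: finite_induct)
  case empty then show ?case by (simp add: zero_ell2)
next
  case (insert a L)
  have "(\<lambda>k. c a * v a k + (\<lambda>k. \<Sum>l\<in>L. c l * v l k) k) \<in> ell2"
    using insert ell2_add ell2_smult by simp
  then show ?case using insert by simp
qed

lemma bop_sum: assumes "bounded_op T" shows "finite L \<Longrightarrow> (\<forall>l\<in>L. v l \<in> ell2) \<Longrightarrow>
   T (\<lambda>k. \<Sum>l\<in>L. c l * v l k) = (\<lambda>k. \<Sum>l\<in>L. c l * T (v l) k)"
proof (induction L rule: finite_induct)
  case empty then show ?case using bop_zero[OF assms] by simp
next
  case (insert a L)
  have s: "(\<lambda>k. \<Sum>l\<in>L. c l * v l k) \<in> ell2" using insert ell2_sum by auto
  have va: "v a \<in> ell2" "(\<lambda>k. c a * v a k) \<in> ell2" using insert ell2_smult by auto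
  have "T (\<lambda>k. \<Sum>l\<in>insert a L. c l * v l k) = T (\<lambda>k. (\<lambda>k. c a * v a k) k + (\<lambda>k. \<Sum>l\<in>L. c l * v l k) k)"
    using insert by simp
  also have "\<dots> = (\<lambda>k. T (\<lambda>k. c a * v a k) k + T (\<lambda>k. \<Sum>l\<in>L. c l * v l k) k)"
    by (rule bop_add[OF assms va(2) s])
  also have "\<dots> = (\<lambda>k. \<Sum>l\<in>insert a L. c l * T (v l) k)"
    using insert bop_smult[OF assms va(1)] by simp
  finally show ?case .
qed

lemma conv_comp:
  assumes "\<And>n. X n \<in> ell2" "Y \<in> ell2" "(\<lambda>n. l2norm (\<lambda>k. X n k - Y k)) \<longlonglongrightarrow> 0"
  shows "(\<lambda>n. X n j) \<longlonglongrightarrow> Y j"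
proof -
  have "(\<lambda>n. X n j - Y j) \<longlonglongrightarrow> 0"
  proof (rule Lim_null_comparison[OF _ assms(3)])
    show "\<forall>\<^sub>F n in sequentially. norm (X n j - Y j) \<le> l2norm (\<lambda>k. X n k - Y k)"
      using ell2_comp_le[OF conjunct1[OF ell2_diff[OF assms(1) assms(2)]]] by simp
  qed
  then have "(\<lambda>n. (X n j - Y j) + Y j) \<longlonglongrightarrow> 0 + Y j" by (intro tendsto_add tendsto_const)
  then show ?thesis by simp
qed

lemma trunc_sum: "trunc L v = (\<lambda>k. \<Sum>l<L. v l * basis_e l k)"
proof (rule ext)
  fix k
  have e: "(\<lambda>l. v l * basis_e l k) = (\<lambda>l. if k = l then v l else 0)"
    by (auto simp: basis_e_def)
  show "trunc L v k = (\<Sum>l<L. v l * basis_e l k)" unfolding e trunc_def by simp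
qed

lemma bop_expand: assumes T: "bounded_op T" and v: "v \<in> ell2"
  shows "(\<lambda>l. v l * T (basis_e l) j) sums T v j"
proof -
  obtain C where C: "C \<ge> 0" "\<forall>x\<in>ell2. l2norm (T x) \<le> C * l2norm x" using bop_bound[OF T] by blast
  have ps: "T (trunc L v) j = (\<Sum>l<L. v l * T (basis_e l) j)" for L
    unfolding trunc_sum using bop_sum[OF T, of "{..<L}" basis_e v] basis_ell2 by simp
  have tv: "trunc L v \<in> ell2" for L using trunc_ell2 by blast
  have d: "(\<lambda>k. T (trunc L v) k - T v k) = T (\<lambda>k. trunc L v k - v k)" for L
    using bop_diff[OF T tv v] by simp
  have "(\<lambda>L. l2norm (\<lambda>k. T (trunc L v) k - T v k)) \<longlonglongrightarrow> 0"
  proof (rule tendsto_sandwich[where f="\<lambda>_. 0" and h="\<lambda>L. C * l2norm (\<lambda>k. trunc L v k - v k)"])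
    show "\<forall>\<^sub>F L in sequentially. 0 \<le> l2norm (\<lambda>k. T (trunc L v) k - T v k)"
      using l2norm_nonneg[OF conjunct1[OF ell2_diff[OF bop_ell2[OF T] bop_ell2[OF T]]]] by simp
    show "\<forall>\<^sub>F L in sequentially. l2norm (\<lambda>k. T (trunc L v) k - T v k) \<le> C * l2norm (\<lambda>k. trunc L v k - v k)"
      unfolding d using C(2) conjunct1[OF ell2_diff[OF tv v]] by simp
    show "(\<lambda>L. C * l2norm (\<lambda>k. trunc L v k - v k)) \<longlonglongrightarrow> 0"
      using tendsto_mult[OF tendsto_const tail_tendsto[OF v], of C] by simp
  qed simp
  then have "(\<lambda>L. T (trunc L v) j) \<longlonglongrightarrow> T v j"
    by (intro conv_comp) (auto intro: bop_ell2[OF T])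
  then show ?thesis unfolding sums_def ps .
qed



lemma S2_bop: "\<sigma> \<in> S2 \<Longrightarrow> bounded_op \<sigma>" by (simp add: S2_def)
lemma S2_summ: "\<sigma> \<in> S2 \<Longrightarrow> summable (\<lambda>n. (l2norm (\<sigma> (basis_e n)))\<^sup>2)" by (simp add: S2_def)

lemma hs_norm_nonneg: "\<sigma> \<in> S2 \<Longrightarrow> 0 \<le> hs_norm \<sigma>"
  unfolding hs_norm_def by (auto intro!: suminf_nonneg S2_summ)

lemma hs_norm_sq: "\<sigma> \<in> S2 \<Longrightarrow> (hs_norm \<sigma>)\<^sup>2 = (\<Sum>n. (l2norm (\<sigma> (basis_e n)))\<^sup>2)"
  unfolding hs_norm_def by (auto intro!: suminf_nonneg S2_summ)

lemma hs_col: assumes "\<sigma> \<in> S2" shows "l2norm (\<sigma> (basis_e j)) \<le> hs_norm \<sigma>"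
proof -
  have "(\<Sum>k\<in>{j}. (l2norm (\<sigma> (basis_e k)))\<^sup>2) \<le> (\<Sum>k. (l2norm (\<sigma> (basis_e k)))\<^sup>2)"
    by (rule sum_le_suminf[OF S2_summ[OF assms]]) auto
  then show ?thesis unfolding hs_norm_def by (simp add: real_le_rsqrt)
qed

lemma hs_entry: "\<sigma> \<in> S2 \<Longrightarrow> cmod (\<sigma> (basis_e j) k) \<le> hs_norm \<sigma>"
  using ell2_comp_le[OF bop_ell2[OF S2_bop]] hs_col order_trans by blast

lemma bop_lincomb: assumes S: "bounded_op S" and T: "bounded_op T"
  shows "bounded_op (\<lambda>x k. a * S x k + b * T x k)"
proof -
  obtain C1 where C1: "C1 \<ge> 0" "\<forall>x\<in>ell2. l2norm (S x) \<le> C1 * l2norm x" using bop_bound[OF S] by blast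
  obtain C2 where C2: "C2 \<ge> 0" "\<forall>x\<in>ell2. l2norm (T x) \<le> C2 * l2norm x" using bop_bound[OF T] by blast
  have mem: "(\<lambda>k. a * S x k + b * T x k) \<in> ell2" for x
    using ell2_add[OF conjunct1[OF ell2_smult[OF bop_ell2[OF S]]] conjunct1[OF ell2_smult[OF bop_ell2[OF T]]]]
    by blast
  have bd: "l2norm (\<lambda>k. a * S x k + b * T x k) \<le> (cmod a * C1 + cmod b * C2) * l2norm x" if x: "x \<in> ell2" for x
  proof -
    have "l2norm (\<lambda>k. a * S x k + b * T x k) \<le> l2norm (\<lambda>k. a * S x k) + l2norm (\<lambda>k. b * T x k)"
      using ell2_add[OF conjunct1[OF ell2_smult[OF bop_ell2[OF S]]] conjunct1[OF ell2_smult[OF bop_ell2[OF T]]]]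
      by blast
    also have "\<dots> = cmod a * l2norm (S x) + cmod b * l2norm (T x)"
      using ell2_smult[OF bop_ell2[OF S]] ell2_smult[OF bop_ell2[OF T]] by simp
    also have "\<dots> \<le> cmod a * (C1 * l2norm x) + cmod b * (C2 * l2norm x)"
      using C1 C2 x by (intro add_mono mult_left_mono) auto
    finally show ?thesis by (simp add: algebra_simps)
  qed
  show ?thesis unfolding bounded_op_def
  proof (intro conjI ballI allI impI)
    fix x assume "x \<notin> ell2" then show "(\<lambda>k. a * S x k + b * T x k) = (\<lambda>_. 0)"
      using bop_out[OF S] bop_out[OF T] by simp
  next
    fix x show "(\<lambda>k. a * S x k + b * T x k) \<in> ell2" by (rule mem)
  next
    fix x y assume "x \<in> ell2" "y \<in> ell2"
    then show "(\<lambda>k. a * S (\<lambda>k. x k + y k) k + b * T (\<lambda>k. x k + y k) k) =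
          (\<lambda>k. (a * S x k + b * T x k) + (a * S y k + b * T y k))"
      using bop_add[OF S] bop_add[OF T] by (simp add: algebra_simps)
  next
    fix x c assume "x \<in> ell2"
    then show "(\<lambda>k. a * S (\<lambda>k. c * x k) k + b * T (\<lambda>k. c * x k) k) = (\<lambda>k. c * (a * S x k + b * T x k))"
      using bop_smult[OF S] bop_smult[OF T] by (simp add: algebra_simps)
  next
    show "\<exists>C. \<forall>x\<in>ell2. l2norm (\<lambda>k. a * S x k + b * T x k) \<le> C * l2norm x"
      using bd by blast
  qed
qed

lemma S2_lincomb: assumes S: "\<sigma> \<in> S2" and T: "\<tau> \<in> S2"
  shows "(\<lambda>x k. a * \<sigma> x k + b * \<tau> x k) \<in> S2 \<and>
         hs_norm (\<lambda>x k. a * \<sigma> x k + b * \<tau> x k) \<le> cmod a * hs_norm \<sigma> + cmod b * hs_norm \<tau>"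
proof -
  define f where "f j = cmod a * l2norm (\<sigma> (basis_e j))" for j
  define g where "g j = cmod b * l2norm (\<tau> (basis_e j))" for j
  define h where "h j = l2norm (\<lambda>k. a * \<sigma> (basis_e j) k + b * \<tau> (basis_e j) k)" for j
  have sS: "bounded_op \<sigma>" and sT: "bounded_op \<tau>" using S T S2_bop by auto
  have hf: "\<bar>h j\<bar> \<le> \<bar>f j\<bar> + \<bar>g j\<bar>" for j
  proof -
    have m1: "(\<lambda>k. a * \<sigma> (basis_e j) k) \<in> ell2" "(\<lambda>k. b * \<tau> (basis_e j) k) \<in> ell2"
      using ell2_smult[OF bop_ell2[OF sS]] ell2_smult[OF bop_ell2[OF sT]] by auto
    have "h j \<le> f j + g j" unfolding h_def f_def g_def
      using conjunct2[OF ell2_add[OF m1]] ell2_smult[OF bop_ell2[OF sS]] ell2_smult[OF bop_ell2[OF sT]] by simp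
    moreover have "0 \<le> h j" unfolding h_def using l2norm_nonneg[OF conjunct1[OF ell2_add[OF m1]]] .
    moreover have "0 \<le> f j" "0 \<le> g j" unfolding f_def g_def
      using l2norm_nonneg[OF bop_ell2[OF sS]] l2norm_nonneg[OF bop_ell2[OF sT]] by auto
    ultimately show ?thesis by simp
  qed
  have f2: "(\<lambda>j. (f j)\<^sup>2) = (\<lambda>j. (cmod a)\<^sup>2 * (l2norm (\<sigma> (basis_e j)))\<^sup>2)"
    by (simp add: f_def power_mult_distrib)
  have g2: "(\<lambda>j. (g j)\<^sup>2) = (\<lambda>j. (cmod b)\<^sup>2 * (l2norm (\<tau> (basis_e j)))\<^sup>2)"
    by (simp add: g_def power_mult_distrib)
  have sf: "summable (\<lambda>j. (f j)\<^sup>2)" unfolding f2 using S2_summ[OF S] by (rule summable_mult)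
  have sg: "summable (\<lambda>j. (g j)\<^sup>2)" unfolding g2 using S2_summ[OF T] by (rule summable_mult)
  have Sf: "sqrt (\<Sum>j. (f j)\<^sup>2) = cmod a * hs_norm \<sigma>"
    unfolding f2 hs_norm_def using S2_summ[OF S] by (simp add: suminf_mult real_sqrt_mult)
  have Sg: "sqrt (\<Sum>j. (g j)\<^sup>2) = cmod b * hs_norm \<tau>"
    unfolding g2 hs_norm_def using S2_summ[OF T] by (simp add: suminf_mult real_sqrt_mult)
  note M = MINK[OF sf sg hf]
  have bo: "bounded_op (\<lambda>x k. a * \<sigma> x k + b * \<tau> x k)" by (rule bop_lincomb[OF sS sT])
  show ?thesis using M bo unfolding Sf Sg S2_def hs_norm_def h_def by simp
qed

lemma S2_add: "\<sigma> \<in> S2 \<Longrightarrow> \<tau> \<in> S2 \<Longrightarrow> (\<lambda>x k. \<sigma> x k + \<tau> x k) \<in> S2 \<and>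
   hs_norm (\<lambda>x k. \<sigma> x k + \<tau> x k) \<le> hs_norm \<sigma> + hs_norm \<tau>"
  using S2_lincomb[of \<sigma> \<tau> 1 1] by simp

lemma S2_diff: "\<sigma> \<in> S2 \<Longrightarrow> \<tau> \<in> S2 \<Longrightarrow> (\<lambda>x k. \<sigma> x k - \<tau> x k) \<in> S2"
  using S2_lincomb[of \<sigma> \<tau> 1 "-1"] by simp

lemma S2_smult: assumes "\<sigma> \<in> S2" shows "(\<lambda>x k. c * \<sigma> x k) \<in> S2 \<and> hs_norm (\<lambda>x k. c * \<sigma> x k) = cmod c * hs_norm \<sigma>"
proof -
  have m: "(\<lambda>x k. c * \<sigma> x k) \<in> S2" using S2_lincomb[OF assms assms, of c 0] by simp
  have e: "(\<lambda>n. (l2norm (\<lambda>k. c * \<sigma> (basis_e n) k))\<^sup>2) = (\<lambda>n. (cmod c)\<^sup>2 * (l2norm (\<sigma> (basis_e n)))\<^sup>2)"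
    using ell2_smult[OF bop_ell2[OF S2_bop[OF assms]]] by (simp add: power_mult_distrib)
  show ?thesis using m S2_summ[OF assms] unfolding hs_norm_def e by (simp add: suminf_mult real_sqrt_mult)
qed

lemma S2_zero: "(\<lambda>_ _. 0) \<in> S2"
proof -
  have z: "l2norm (\<lambda>_. 0) = 0" by (simp add: l2norm_def)
  have "bounded_op (\<lambda>_ _. 0)" unfolding bounded_op_def using zero_ell2 z by (auto intro: exI[of _ 0])
  moreover note z
  ultimately show ?thesis by (simp add: S2_def)
qed

lemma S2_sum: "finite L \<Longrightarrow> (\<forall>l\<in>L. \<sigma> l \<in> S2) \<Longrightarrow> (\<lambda>x k. \<Sum>l\<in>L. c l * \<sigma> l x k) \<in> S2"
proof (induction L rule: finite_induct)
  case empty then show ?case using S2_zero by simp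
next
  case (insert a L)
  then have "(\<lambda>x k. c a * \<sigma> a x k + 1 * (\<lambda>x k. \<Sum>l\<in>L. c l * \<sigma> l x k) x k) \<in> S2"
    using S2_lincomb[of "\<sigma> a" "\<lambda>x k. \<Sum>l\<in>L. c l * \<sigma> l x k" "c a" 1] by simp
  then show ?case using insert by simp
qed

lemma A_S2: "bounded_S2 A \<Longrightarrow> \<eta> \<in> S2 \<Longrightarrow> A \<eta> \<in> S2" by (simp add: bounded_S2_def)

lemma A_add: "bounded_S2 A \<Longrightarrow> \<eta> \<in> S2 \<Longrightarrow> \<tau> \<in> S2 \<Longrightarrow> A (\<lambda>x k. \<eta> x k + \<tau> x k) = (\<lambda>x k. A \<eta> x k + A \<tau> x k)"
  by (simp add: bounded_S2_def)

lemma A_smult: "bounded_S2 A \<Longrightarrow> \<eta> \<in> S2 \<Longrightarrow> A (\<lambda>x k. c * \<eta> x k) = (\<lambda>x k. c * A \<eta> x k)"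
  by (simp add: bounded_S2_def)

lemma A_bound: assumes "bounded_S2 A" shows "\<exists>C\<ge>0. \<forall>\<eta>\<in>S2. hs_norm (A \<eta>) \<le> C * hs_norm \<eta>"
proof -
  obtain C where C: "\<forall>\<eta>\<in>S2. hs_norm (A \<eta>) \<le> C * hs_norm \<eta>" using assms by (auto simp: bounded_S2_def)
  have "\<forall>\<eta>\<in>S2. hs_norm (A \<eta>) \<le> max C 0 * hs_norm \<eta>"
  proof
    fix \<eta> assume x: "\<eta> \<in> S2"
    have "C * hs_norm \<eta> \<le> max C 0 * hs_norm \<eta>" using hs_norm_nonneg[OF x] by (intro mult_right_mono) auto
    then show "hs_norm (A \<eta>) \<le> max C 0 * hs_norm \<eta>" using C x by force
  qed
  then show ?thesis by (intro exI[of _ "max C 0"]) auto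
qed

lemma A_zero: "bounded_S2 A \<Longrightarrow> A (\<lambda>_ _. 0) = (\<lambda>_ _. 0)"
  using A_smult[of A "\<lambda>_ _. 0" 0] S2_zero by simp

lemma A_diff: assumes "bounded_S2 A" "\<eta> \<in> S2" "\<tau> \<in> S2"
  shows "A (\<lambda>x k. \<eta> x k - \<tau> x k) = (\<lambda>x k. A \<eta> x k - A \<tau> x k)"
proof -
  have y: "(\<lambda>x k. (-1) * \<tau> x k) \<in> S2" using S2_smult[OF assms(3)] by blast
  have "A (\<lambda>x k. \<eta> x k - \<tau> x k) = A (\<lambda>x k. \<eta> x k + (\<lambda>x k. (-1) * \<tau> x k) x k)" by simp
  also have "\<dots> = (\<lambda>x k. A \<eta> x k + A (\<lambda>x k. (-1) * \<tau> x k) x k)" by (rule A_add[OF assms(1,2) y])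
  also have "\<dots> = (\<lambda>x k. A \<eta> x k - A \<tau> x k)" using A_smult[OF assms(1,3), of "-1"] by simp
  finally show ?thesis .
qed

lemma A_sum: assumes "bounded_S2 A" shows "finite L \<Longrightarrow> (\<forall>l\<in>L. \<sigma> l \<in> S2) \<Longrightarrow>
   A (\<lambda>x k. \<Sum>l\<in>L. c l * \<sigma> l x k) = (\<lambda>x k. \<Sum>l\<in>L. c l * A (\<sigma> l) x k)"
proof (induction L rule: finite_induct)
  case empty then show ?case using A_zero[OF assms] by simp
next
  case (insert a L)
  have s: "(\<lambda>x k. \<Sum>l\<in>L. c l * \<sigma> l x k) \<in> S2" using insert S2_sum by auto
  have va: "\<sigma> a \<in> S2" "(\<lambda>x k. c a * \<sigma> a x k) \<in> S2" using insert S2_smult by auto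
  have "A (\<lambda>x k. \<Sum>l\<in>insert a L. c l * \<sigma> l x k) = A (\<lambda>x k. (\<lambda>x k. c a * \<sigma> a x k) x k + (\<lambda>x k. \<Sum>l\<in>L. c l * \<sigma> l x k) x k)"
    using insert by simp
  also have "\<dots> = (\<lambda>x k. A (\<lambda>x k. c a * \<sigma> a x k) x k + A (\<lambda>x k. \<Sum>l\<in>L. c l * \<sigma> l x k) x k)"
    by (rule A_add[OF assms va(2) s])
  also have "\<dots> = (\<lambda>x k. \<Sum>l\<in>insert a L. c l * A (\<sigma> l) x k)"
    using insert A_smult[OF assms va(1)] by simp
  finally show ?case .
qed



definition zeta :: "(nat \<Rightarrow> complex) \<Rightarrow> nat \<Rightarrow> hop" where
  "zeta x m z = (if z \<in> ell2 then (\<lambda>k. l2inner x z * basis_e m k) else (\<lambda>_. 0))"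

lemma eps_zeta: "eps m l = zeta (basis_e l) m"
  by (auto simp: eps_def zeta_def fun_eq_iff)

lemma l2inner_diff1: assumes "x \<in> ell2" "y \<in> ell2" "z \<in> ell2"
  shows "l2inner (\<lambda>k. x k - y k) z = l2inner x z - l2inner y z"
proof -
  have y: "(\<lambda>k. (-1) * y k) \<in> ell2" using ell2_smult[OF assms(2)] by blast
  have "l2inner (\<lambda>k. x k - y k) z = l2inner (\<lambda>k. x k + (\<lambda>k. (-1) * y k) k) z" by simp
  also have "\<dots> = l2inner x z + l2inner (\<lambda>k. (-1) * y k) z" by (rule l2inner_add1[OF assms(1) y assms(3)])
  also have "\<dots> = l2inner x z - l2inner y z" using l2inner_smult1[OF assms(2,3), of "-1"] by simp
  finally show ?thesis .
qed

lemma zeta_bop: assumes x: "x \<in> ell2" shows "bounded_op (zeta x m)"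
  unfolding bounded_op_def
proof (intro conjI ballI allI impI)
  fix z assume "z \<notin> ell2" then show "zeta x m z = (\<lambda>_. 0)" by (simp add: zeta_def)
next
  fix z show "zeta x m z \<in> ell2" using sbasis zero_ell2 by (simp add: zeta_def)
next
  fix y z assume "y \<in> ell2" "z \<in> ell2"
  then show "zeta x m (\<lambda>k. y k + z k) = (\<lambda>k. zeta x m y k + zeta x m z k)"
    using ell2_add[of y z] l2inner_add2[OF x] by (simp add: zeta_def distrib_right)
next
  fix z c assume "z \<in> ell2"
  then show "zeta x m (\<lambda>k. c * z k) = (\<lambda>k. c * zeta x m z k)"
    using ell2_smult[of z c] l2inner_smult2[OF x] by (simp add: zeta_def mult.assoc)
next
  have "l2norm (zeta x m z) \<le> l2norm x * l2norm z" if z: "z \<in> ell2" for z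
    using z sbasis[of "l2inner x z" m] CS[OF x z] by (simp add: zeta_def)
  then show "\<exists>C. \<forall>z\<in>ell2. l2norm (zeta x m z) \<le> C * l2norm z" by blast
qed

lemma l2inner_basis2: "x \<in> ell2 \<Longrightarrow> l2inner x (basis_e j) = cnj (x j)"
  using l2inner_cnj[of "basis_e j" x] l2inner_basis[of j x] basis_ell2 by simp

lemma zeta_basis: "x \<in> ell2 \<Longrightarrow> zeta x m (basis_e j) = (\<lambda>k. cnj (x j) * basis_e m k)"
  using basis_ell2 l2inner_basis2 by (simp add: zeta_def)

lemma zeta_S2: assumes x: "x \<in> ell2" shows "zeta x m \<in> S2 \<and> hs_norm (zeta x m) = l2norm x"
proof -
  have e: "(\<lambda>n. (l2norm (zeta x m (basis_e n)))\<^sup>2) = (\<lambda>n. (cmod (x n))\<^sup>2)"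
    using zeta_basis[OF x] sbasis by simp
  have s: "summable (\<lambda>n. (l2norm (zeta x m (basis_e n)))\<^sup>2)" unfolding e using x by (simp add: ell2_iff)
  have h: "hs_norm (zeta x m) = l2norm x" unfolding hs_norm_def e by (simp only: l2norm_def)
  show ?thesis using s h zeta_bop[OF x] by (simp add: S2_def)
qed

lemma eps_S2: "eps m l \<in> S2"
  using zeta_S2[OF basis_ell2(1)] eps_zeta by simp

lemma zeta_diff: assumes "x \<in> ell2" "y \<in> ell2"
  shows "(\<lambda>z k. zeta x m z k - zeta y m z k) = zeta (\<lambda>k. x k - y k) m"
  using l2inner_diff1[OF assms] by (auto simp: zeta_def fun_eq_iff left_diff_distrib)

lemma zeta_trunc: "zeta (trunc L x) m = (\<lambda>z k. \<Sum>l<L. cnj (x l) * eps m l z k)"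
proof (intro ext)
  fix z k
  show "zeta (trunc L x) m z k = (\<Sum>l<L. cnj (x l) * eps m l z k)"
  proof (cases "z \<in> ell2")
    case True
    have "(\<lambda>l. cnj (trunc L x l) * z l) = (\<lambda>l. if l \<in> {..<L} then cnj (x l) * z l else 0)"
      by (auto simp: trunc_def)
    then have "l2inner (trunc L x) z = (\<Sum>l<L. cnj (x l) * z l)"
      unfolding l2inner_def using sums_If_finite_set[of "{..<L}" "\<lambda>l. cnj (x l) * z l"]
      by (simp add: sums_iff)
    then show ?thesis using True
      by (simp add: zeta_def eps_def l2inner_basis sum_distrib_right mult.assoc)
  next
    case False then show ?thesis by (simp add: zeta_def eps_def)
  qed
qed



lemma hs_inner_zeta: assumes y: "y \<in> ell2" and s: "\<sigma> \<in> S2"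
  shows "hs_inner (zeta y n) \<sigma> = \<sigma> y n"
proof -
  have e: "(\<lambda>l. l2inner (zeta y n (basis_e l)) (\<sigma> (basis_e l))) = (\<lambda>l. y l * \<sigma> (basis_e l) n)"
    using zeta_basis[OF y] l2inner_sbasis by simp
  show ?thesis unfolding hs_inner_def e using bop_expand[OF S2_bop[OF s] y] by (simp add: sums_iff)
qed

lemma comp_bound: assumes s: "\<sigma> \<in> S2" and y: "y \<in> ell2"
  shows "cmod (\<sigma> y n) \<le> l2norm y * hs_norm \<sigma>"
proof -
  define f where "f l = cmod (y l)" for l
  define g where "g l = cmod (\<sigma> (basis_e l) n)" for l
  have sf: "summable (\<lambda>l. (f l)\<^sup>2)" using y by (simp add: f_def[abs_def] ell2_iff)
  have gle: "(g l)\<^sup>2 \<le> (l2norm (\<sigma> (basis_e l)))\<^sup>2" for l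
    unfolding g_def by (intro power_mono ell2_comp_le bop_ell2[OF S2_bop[OF s]]) auto
  have sg: "summable (\<lambda>l. (g l)\<^sup>2)"
    by (rule summable_comparison_test[OF _ S2_summ[OF s]]) (use gle in auto)
  have Sg: "sqrt (\<Sum>l. (g l)\<^sup>2) \<le> hs_norm \<sigma>"
    unfolding hs_norm_def by (intro real_sqrt_le_mono suminf_le gle sg S2_summ[OF s])
  note c = CS_real[OF sf sg]
  have nt: "norm (y l * \<sigma> (basis_e l) n) = \<bar>f l\<bar> * \<bar>g l\<bar>" for l
    by (simp add: f_def g_def norm_mult)
  have sn: "summable (\<lambda>l. norm (y l * \<sigma> (basis_e l) n))" unfolding nt using c by simp
  have "\<sigma> y n = (\<Sum>l. y l * \<sigma> (basis_e l) n)"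
    using bop_expand[OF S2_bop[OF s] y] by (simp add: sums_iff)
  then have "cmod (\<sigma> y n) \<le> (\<Sum>l. norm (y l * \<sigma> (basis_e l) n))"
    using summable_norm[OF sn] by simp
  also have "\<dots> \<le> sqrt (\<Sum>l. (f l)\<^sup>2) * sqrt (\<Sum>l. (g l)\<^sup>2)" unfolding nt using c by simp
  also have "\<dots> \<le> l2norm y * hs_norm \<sigma>"
  proof -
    have "sqrt (\<Sum>l. (f l)\<^sup>2) = l2norm y" by (simp add: l2norm_def f_def)
    then show ?thesis using Sg l2norm_nonneg[OF y] by (simp add: mult_left_mono)
  qed
  finally show ?thesis .
qed

lemma cnj_mult_self: "cnj z * z = complex_of_real ((cmod z)\<^sup>2)"
  using complex_norm_square[of z] by (simp only: mult.commute)

lemma K_sums: assumes A: "bounded_S2 A" and x: "x \<in> ell2" and y: "y \<in> ell2"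
  shows "(\<lambda>l. cnj (x l) * A (eps m l) y n) sums A (zeta x m) y n"
proof -
  obtain C where C: "C \<ge> 0" "\<forall>\<eta>\<in>S2. hs_norm (A \<eta>) \<le> C * hs_norm \<eta>" using A_bound[OF A] by blast
  have ps: "(\<Sum>l<L. cnj (x l) * A (eps m l) y n) = A (zeta (trunc L x) m) y n" for L
    unfolding zeta_trunc using A_sum[OF A, of "{..<L}" "eps m" "\<lambda>l. cnj (x l)"] eps_S2 by simp
  have tx: "trunc L x \<in> ell2" for L using trunc_ell2 by blast
  have zS: "zeta (trunc L x) m \<in> S2" for L using zeta_S2[OF tx] by blast
  have zx: "zeta x m \<in> S2" using zeta_S2[OF x] by blast
  have d: "A (zeta (trunc L x) m) y n - A (zeta x m) y n = A (zeta (\<lambda>k. trunc L x k - x k) m) y n" for L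
    using A_diff[OF A zS zx, symmetric] zeta_diff[OF tx x] by (simp add: fun_eq_iff)
  have dm: "(\<lambda>k. trunc L x k - x k) \<in> ell2" for L using ell2_diff[OF tx x] by blast
  have "(\<lambda>L. A (zeta (trunc L x) m) y n - A (zeta x m) y n) \<longlonglongrightarrow> 0"
  proof (rule Lim_null_comparison)
    show "\<forall>\<^sub>F L in sequentially. norm (A (zeta (trunc L x) m) y n - A (zeta x m) y n)
        \<le> l2norm y * C * l2norm (\<lambda>k. trunc L x k - x k)"
    proof (intro always_eventually allI)
      fix L
      have "norm (A (zeta (trunc L x) m) y n - A (zeta x m) y n) \<le> l2norm y * hs_norm (A (zeta (\<lambda>k. trunc L x k - x k) m))"
        unfolding d using comp_bound[OF A_S2[OF A] y] conjunct1[OF zeta_S2[OF dm]] by blast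
      also have "\<dots> \<le> l2norm y * (C * l2norm (\<lambda>k. trunc L x k - x k))"
      proof -
        have "hs_norm (A (zeta (\<lambda>k. trunc L x k - x k) m)) \<le> C * hs_norm (zeta (\<lambda>k. trunc L x k - x k) m)"
          using C(2) conjunct1[OF zeta_S2[OF dm]] by blast
        then show ?thesis using conjunct2[OF zeta_S2[OF dm]] l2norm_nonneg[OF y] by (simp add: mult_left_mono)
      qed
      finally show "norm (A (zeta (trunc L x) m) y n - A (zeta x m) y n) \<le> l2norm y * C * l2norm (\<lambda>k. trunc L x k - x k)"
        by (simp add: mult.assoc)
    qed
    show "(\<lambda>L. l2norm y * C * l2norm (\<lambda>k. trunc L x k - x k)) \<longlonglongrightarrow> 0"
      using tendsto_mult[OF tendsto_const tail_tendsto[OF x], of "l2norm y * C"] by simp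
  qed
  then have "(\<lambda>L. (A (zeta (trunc L x) m) y n - A (zeta x m) y n) + A (zeta x m) y n) \<longlonglongrightarrow> 0 + A (zeta x m) y n"
    by (intro tendsto_add tendsto_const)
  then show ?thesis unfolding sums_def ps by simp
qed

definition bb :: "sop \<Rightarrow> nat \<Rightarrow> nat \<Rightarrow> hop" where
  "bb A n m y = (if y \<in> ell2 then (\<lambda>k. A (eps m k) y n) else (\<lambda>_. 0))"

lemma K_inner: assumes A: "bounded_S2 A" and x: "x \<in> ell2" and y: "y \<in> ell2"
  shows "l2inner x (bb A n m y) = A (zeta x m) y n"
  using K_sums[OF A x y, of m n] y unfolding l2inner_def bb_def by (simp add: sums_iff)

lemma bb_bound: assumes A: "bounded_S2 A" and C: "C \<ge> 0" "\<forall>\<eta>\<in>S2. hs_norm (A \<eta>) \<le> C * hs_norm \<eta>"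
  and y: "y \<in> ell2"
  shows "bb A n m y \<in> ell2 \<and> l2norm (bb A n m y) \<le> C * l2norm y"
proof -
  define s where "s k = A (eps m k) y n" for k
  have bs: "bb A n m y = s" using y by (simp add: bb_def s_def[abs_def])
  have X: "(\<Sum>k<K. (cmod (s k))\<^sup>2) \<le> (C * l2norm y)\<^sup>2" for K
  proof -
    define X where "X = (\<Sum>k<K. (cmod (s k))\<^sup>2)"
    have X0: "0 \<le> X" unfolding X_def by (auto intro: sum_nonneg)
    define x where "x = trunc K s"
    have x: "x \<in> ell2" "(l2norm x)\<^sup>2 = X" using trunc_ell2 unfolding x_def X_def by auto
    have lx: "l2norm x = sqrt X" using x l2norm_nonneg[OF x(1)] by (metis real_sqrt_unique)
    have e: "(\<lambda>l. cnj (x l) * A (eps m l) y n) = (\<lambda>l. if l \<in> {..<K} then complex_of_real ((cmod (s l))\<^sup>2) else 0)"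
    proof (rule ext)
      fix l show "cnj (x l) * A (eps m l) y n = (if l \<in> {..<K} then complex_of_real ((cmod (s l))\<^sup>2) else 0)"
        unfolding x_def trunc_def s_def[symmetric] using cnj_mult_self[of "s l"] by simp
    qed
    have "(\<lambda>l. cnj (x l) * A (eps m l) y n) sums complex_of_real X"
      unfolding e X_def of_real_sum by (rule sums_If_finite_set) auto
    then have v: "A (zeta x m) y n = complex_of_real X" using K_sums[OF A x(1) y, of m n] sums_unique2 by blast
    have "X = cmod (A (zeta x m) y n)" using v X0 by simp
    also have "\<dots> \<le> l2norm y * hs_norm (A (zeta x m))"
      using comp_bound[OF A_S2[OF A] y] zeta_S2[OF x(1)] by blast
    also have "\<dots> \<le> l2norm y * (C * l2norm x)"
    proof -
      have "hs_norm (A (zeta x m)) \<le> C * hs_norm (zeta x m)"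
        using C(2) conjunct1[OF zeta_S2[OF x(1)]] by blast
      then show ?thesis using conjunct2[OF zeta_S2[OF x(1)]] l2norm_nonneg[OF y] by (simp add: mult_left_mono)
    qed
    finally have "X \<le> (C * l2norm y) * sqrt X" unfolding lx by (simp add: ac_simps)
    then have "sqrt X * sqrt X \<le> (C * l2norm y) * sqrt X" using X0 by simp
    then have "sqrt X \<le> C * l2norm y \<or> sqrt X = 0"
      using X0 by (metis mult_right_le_imp_le order_le_less real_sqrt_ge_zero)
    then have "sqrt X \<le> C * l2norm y" using C(1) l2norm_nonneg[OF y] by auto
    then have "(sqrt X)\<^sup>2 \<le> (C * l2norm y)\<^sup>2" using X0 by (intro power_mono) auto
    then show ?thesis using X0 unfolding X_def by simp
  qed
  have sm: "summable (\<lambda>k. (cmod (s k))\<^sup>2)" by (rule summableI_nonneg_bounded[OF _ X]) auto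
  have "(\<Sum>k. (cmod (s k))\<^sup>2) \<le> (C * l2norm y)\<^sup>2" by (rule suminf_le_const[OF sm X])
  then have "l2norm s \<le> sqrt ((C * l2norm y)\<^sup>2)" unfolding l2norm_def by (rule real_sqrt_le_mono)
  then show ?thesis unfolding bs using sm C(1) l2norm_nonneg[OF y] by (simp add: ell2_iff)
qed



lemma hs_inner_sums: assumes S: "\<sigma> \<in> S2" and T: "\<tau> \<in> S2"
  shows "(\<lambda>n. l2inner (\<sigma> (basis_e n)) (\<tau> (basis_e n))) sums hs_inner \<sigma> \<tau>"
proof -
  have c: "summable (\<lambda>n. \<bar>l2norm (\<sigma> (basis_e n))\<bar> * \<bar>l2norm (\<tau> (basis_e n))\<bar>)"
    using CS_real[OF S2_summ[OF S] S2_summ[OF T]] by blast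
  have le: "norm (l2inner (\<sigma> (basis_e n)) (\<tau> (basis_e n))) \<le> \<bar>l2norm (\<sigma> (basis_e n))\<bar> * \<bar>l2norm (\<tau> (basis_e n))\<bar>" for n
    using CS[OF bop_ell2[OF S2_bop[OF S]] bop_ell2[OF S2_bop[OF T]], of "basis_e n" "basis_e n"]
      l2norm_nonneg[OF bop_ell2[OF S2_bop[OF S]]] l2norm_nonneg[OF bop_ell2[OF S2_bop[OF T]]] by simp
  have "summable (\<lambda>n. l2inner (\<sigma> (basis_e n)) (\<tau> (basis_e n)))"
    by (rule summable_comparison_test[OF _ c]) (use le in auto)
  then show ?thesis unfolding hs_inner_def by (rule summable_sums)
qed

lemma hs_inner_add2: assumes "\<sigma> \<in> S2" "\<tau> \<in> S2" "\<rho> \<in> S2"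
  shows "hs_inner \<sigma> (\<lambda>x k. \<tau> x k + \<rho> x k) = hs_inner \<sigma> \<tau> + hs_inner \<sigma> \<rho>"
proof -
  have "(\<lambda>n. l2inner (\<sigma> (basis_e n)) (\<tau> (basis_e n)) + l2inner (\<sigma> (basis_e n)) (\<rho> (basis_e n))) sums (hs_inner \<sigma> \<tau> + hs_inner \<sigma> \<rho>)"
    by (intro sums_add hs_inner_sums assms)
  moreover have "(\<lambda>n. l2inner (\<sigma> (basis_e n)) (\<tau> (basis_e n)) + l2inner (\<sigma> (basis_e n)) (\<rho> (basis_e n)))
     = (\<lambda>n. l2inner (\<sigma> (basis_e n)) (\<lambda>k. \<tau> (basis_e n) k + \<rho> (basis_e n) k))"
    using l2inner_add2 bop_ell2 S2_bop assms by (simp add: fun_eq_iff)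
  ultimately show ?thesis unfolding hs_inner_def[of \<sigma> "\<lambda>x k. \<tau> x k + \<rho> x k"] by (simp add: sums_iff)
qed

lemma hs_inner_add1: assumes "\<sigma> \<in> S2" "\<tau> \<in> S2" "\<rho> \<in> S2"
  shows "hs_inner (\<lambda>x k. \<tau> x k + \<rho> x k) \<sigma> = hs_inner \<tau> \<sigma> + hs_inner \<rho> \<sigma>"
proof -
  have "(\<lambda>n. l2inner (\<tau> (basis_e n)) (\<sigma> (basis_e n)) + l2inner (\<rho> (basis_e n)) (\<sigma> (basis_e n))) sums (hs_inner \<tau> \<sigma> + hs_inner \<rho> \<sigma>)"
    by (intro sums_add hs_inner_sums assms)
  moreover have "(\<lambda>n. l2inner (\<tau> (basis_e n)) (\<sigma> (basis_e n)) + l2inner (\<rho> (basis_e n)) (\<sigma> (basis_e n)))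
     = (\<lambda>n. l2inner (\<lambda>k. \<tau> (basis_e n) k + \<rho> (basis_e n) k) (\<sigma> (basis_e n)))"
    using l2inner_add1 bop_ell2 S2_bop assms by (simp add: fun_eq_iff)
  ultimately show ?thesis unfolding hs_inner_def[of "\<lambda>x k. \<tau> x k + \<rho> x k"] by (simp add: sums_iff)
qed

lemma hs_inner_smult2: assumes "\<sigma> \<in> S2" "\<tau> \<in> S2"
  shows "hs_inner \<sigma> (\<lambda>x k. c * \<tau> x k) = c * hs_inner \<sigma> \<tau>"
proof -
  have "(\<lambda>n. c * l2inner (\<sigma> (basis_e n)) (\<tau> (basis_e n))) sums (c * hs_inner \<sigma> \<tau>)"
    by (intro sums_mult hs_inner_sums assms)
  moreover have "(\<lambda>n. c * l2inner (\<sigma> (basis_e n)) (\<tau> (basis_e n)))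
     = (\<lambda>n. l2inner (\<sigma> (basis_e n)) (\<lambda>k. c * \<tau> (basis_e n) k))"
    using l2inner_smult2 bop_ell2 S2_bop assms by (simp add: fun_eq_iff)
  ultimately show ?thesis unfolding hs_inner_def[of \<sigma> "\<lambda>x k. c * \<tau> x k"] by (simp add: sums_iff)
qed

lemma hs_inner_smult1: assumes "\<sigma> \<in> S2" "\<tau> \<in> S2"
  shows "hs_inner (\<lambda>x k. c * \<tau> x k) \<sigma> = cnj c * hs_inner \<tau> \<sigma>"
proof -
  have "(\<lambda>n. cnj c * l2inner (\<tau> (basis_e n)) (\<sigma> (basis_e n))) sums (cnj c * hs_inner \<tau> \<sigma>)"
    by (intro sums_mult hs_inner_sums assms)
  moreover have "(\<lambda>n. cnj c * l2inner (\<tau> (basis_e n)) (\<sigma> (basis_e n)))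
     = (\<lambda>n. l2inner (\<lambda>k. c * \<tau> (basis_e n) k) (\<sigma> (basis_e n)))"
    using l2inner_smult1 bop_ell2 S2_bop assms by (simp add: fun_eq_iff)
  ultimately show ?thesis unfolding hs_inner_def[of "\<lambda>x k. c * \<tau> x k"] by (simp add: sums_iff)
qed

lemma polar_expand: assumes A: "bounded_S2 A" and S: "\<sigma> \<in> S2" and T: "\<tau> \<in> S2"
  shows "hs_inner (\<lambda>x k. \<sigma> x k + c * \<tau> x k) (A (\<lambda>x k. \<sigma> x k + c * \<tau> x k)) =
    hs_inner \<sigma> (A \<sigma>) + c * hs_inner \<sigma> (A \<tau>) + cnj c * hs_inner \<tau> (A \<sigma>) + cnj c * c * hs_inner \<tau> (A \<tau>)"
proof -
  have u: "(\<lambda>x k. c * \<tau> x k) \<in> S2" using S2_smult[OF T] by blast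
  have AS: "A \<sigma> \<in> S2" "A \<tau> \<in> S2" using A_S2[OF A] S T by auto
  have cAT: "(\<lambda>x k. c * A \<tau> x k) \<in> S2" using S2_smult[OF AS(2)] by blast
  have "A (\<lambda>x k. \<sigma> x k + c * \<tau> x k) = (\<lambda>x k. A \<sigma> x k + A (\<lambda>x k. c * \<tau> x k) x k)"
    using A_add[OF A S u] by simp
  also have "\<dots> = (\<lambda>x k. A \<sigma> x k + c * A \<tau> x k)" using A_smult[OF A T] by simp
  finally have eA: "A (\<lambda>x k. \<sigma> x k + c * \<tau> x k) = (\<lambda>x k. A \<sigma> x k + c * A \<tau> x k)" .
  have s1: "(\<lambda>x k. A \<sigma> x k + (\<lambda>x k. c * A \<tau> x k) x k) \<in> S2" using S2_add[OF AS(1) cAT] by blast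
  have "hs_inner (\<lambda>x k. \<sigma> x k + (\<lambda>x k. c * \<tau> x k) x k) (\<lambda>x k. A \<sigma> x k + (\<lambda>x k. c * A \<tau> x k) x k)
      = hs_inner \<sigma> (\<lambda>x k. A \<sigma> x k + (\<lambda>x k. c * A \<tau> x k) x k) + hs_inner (\<lambda>x k. c * \<tau> x k) (\<lambda>x k. A \<sigma> x k + (\<lambda>x k. c * A \<tau> x k) x k)"
    by (rule hs_inner_add1[OF s1 S u])
  also have "\<dots> = hs_inner \<sigma> (\<lambda>x k. A \<sigma> x k + (\<lambda>x k. c * A \<tau> x k) x k) + cnj c * hs_inner \<tau> (\<lambda>x k. A \<sigma> x k + (\<lambda>x k. c * A \<tau> x k) x k)"
    using hs_inner_smult1[OF s1 T] by simp
  also have "hs_inner \<sigma> (\<lambda>x k. A \<sigma> x k + (\<lambda>x k. c * A \<tau> x k) x k) = hs_inner \<sigma> (A \<sigma>) + c * hs_inner \<sigma> (A \<tau>)"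
    using hs_inner_add2[OF S AS(1) cAT] hs_inner_smult2[OF S AS(2)] by simp
  also have "hs_inner \<tau> (\<lambda>x k. A \<sigma> x k + (\<lambda>x k. c * A \<tau> x k) x k) = hs_inner \<tau> (A \<sigma>) + c * hs_inner \<tau> (A \<tau>)"
    using hs_inner_add2[OF T AS(1) cAT] hs_inner_smult2[OF T AS(2)] by simp
  finally show ?thesis unfolding eA by (simp add: algebra_simps)
qed

lemma herm: assumes A: "bounded_S2 A" and N: "nonneg_S2 A" and S: "\<sigma> \<in> S2" and T: "\<tau> \<in> S2"
  shows "hs_inner \<sigma> (A \<tau>) = cnj (hs_inner \<tau> (A \<sigma>))"
proof -
  have im: "Im (hs_inner \<eta> (A \<eta>)) = 0" if "\<eta> \<in> S2" for \<eta> using N that by (simp add: nonneg_S2_def)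
  have m: "(\<lambda>x k. \<sigma> x k + c * \<tau> x k) \<in> S2" for c
    using S2_add[OF S conjunct1[OF S2_smult[OF T]]] by simp
  define p where "p = hs_inner \<sigma> (A \<tau>)"
  define r where "r = hs_inner \<tau> (A \<sigma>)"
  note e1 = polar_expand[OF A S T, of 1]
  note e2 = polar_expand[OF A S T, of \<i>]
  have "Im (hs_inner \<sigma> (A \<sigma>) + 1 * p + cnj 1 * r + cnj 1 * 1 * hs_inner \<tau> (A \<tau>)) = 0"
    using im[OF m[of 1]] e1 unfolding p_def r_def by simp
  then have i1: "Im p + Im r = 0" using im[OF S] im[OF T] by simp
  have "Im (hs_inner \<sigma> (A \<sigma>) + \<i> * p + cnj \<i> * r + cnj \<i> * \<i> * hs_inner \<tau> (A \<tau>)) = 0"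
    using im[OF m[of \<i>]] e2 unfolding p_def r_def by simp
  then have i2: "Re p - Re r = 0" using im[OF S] im[OF T] by simp
  show ?thesis unfolding p_def[symmetric] r_def[symmetric] using i1 i2 by (simp add: complex_eq_iff)
qed



lemma bb_bop: assumes A: "bounded_S2 A" shows "bounded_op (bb A n m)"
proof -
  obtain C where C: "C \<ge> 0" "\<forall>\<eta>\<in>S2. hs_norm (A \<eta>) \<le> C * hs_norm \<eta>" using A_bound[OF A] by blast
  have E: "bounded_op (A (eps m k))" for k using S2_bop[OF A_S2[OF A eps_S2]] .
  show ?thesis unfolding bounded_op_def
  proof (intro conjI ballI allI impI)
    fix x assume "x \<notin> ell2" then show "bb A n m x = (\<lambda>_. 0)" by (simp add: bb_def)
  next
    fix x show "bb A n m x \<in> ell2"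
      using bb_bound[OF A C] zero_ell2 by (cases "x \<in> ell2") (auto simp: bb_def)
  next
    fix x y assume xy: "x \<in> ell2" "y \<in> ell2"
    then show "bb A n m (\<lambda>k. x k + y k) = (\<lambda>k. bb A n m x k + bb A n m y k)"
      using ell2_add[OF xy] bop_add[OF E xy] by (simp add: bb_def)
  next
    fix x c assume x: "x \<in> ell2"
    then show "bb A n m (\<lambda>k. c * x k) = (\<lambda>k. c * bb A n m x k)"
      using ell2_smult[OF x] bop_smult[OF E x] by (simp add: bb_def)
  next
    show "\<exists>C. \<forall>x\<in>ell2. l2norm (bb A n m x) \<le> C * l2norm x" using bb_bound[OF A C] by blast
  qed
qed

lemma bb_quad: assumes A: "bounded_S2 A" and x: "x \<in> ell2" and y: "y \<in> ell2"
  shows "l2inner x (bb A n m y) = hs_inner (zeta y n) (A (zeta x m))"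
  using K_inner[OF A x y] hs_inner_zeta[OF y A_S2[OF A conjunct1[OF zeta_S2[OF x]]]] by simp

lemma bb_herm: assumes A: "bounded_S2 A" and N: "nonneg_S2 A" and x: "x \<in> ell2" and y: "y \<in> ell2"
  shows "l2inner x (bb A n m y) = l2inner (bb A m n x) y"
proof -
  have bx: "bb A m n x \<in> ell2" using bop_ell2[OF bb_bop[OF A]] .
  have "l2inner (bb A m n x) y = cnj (l2inner y (bb A m n x))" using l2inner_cnj[OF y bx] .
  also have "\<dots> = cnj (hs_inner (zeta x m) (A (zeta y n)))" using bb_quad[OF A y x] by simp
  also have "\<dots> = hs_inner (zeta y n) (A (zeta x m))"
    using herm[OF A N conjunct1[OF zeta_S2[OF y]] conjunct1[OF zeta_S2[OF x]], of n m] by simp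
  finally show ?thesis using bb_quad[OF A x y] by simp
qed

definition aa :: "sop \<Rightarrow> nat \<Rightarrow> nat \<Rightarrow> hop" where
  "aa A n m = (\<lambda>y k. (1 - \<i>) / 2 * bb A n m y k + (1 + \<i>) / 2 * bb A m n y k)"

lemma aa_bop: "bounded_S2 A \<Longrightarrow> bounded_op (aa A n m)"
  unfolding aa_def by (intro bop_lincomb bb_bop)

lemma aa_sa: assumes A: "bounded_S2 A" and N: "nonneg_S2 A" shows "selfadjoint_op (aa A n m)"
  unfolding selfadjoint_op_def
proof (intro ballI)
  fix x y assume x: "x \<in> ell2" and y: "y \<in> ell2"
  have m: "bb A n m z \<in> ell2" "bb A m n z \<in> ell2" for z using bop_ell2[OF bb_bop[OF A]] by auto
  have ms: "(\<lambda>k. c * bb A n m z k) \<in> ell2" "(\<lambda>k. c * bb A m n z k) \<in> ell2" for c z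
    using ell2_smult[OF m(1)] ell2_smult[OF m(2)] by auto
  have "l2inner x (aa A n m y) = l2inner x (\<lambda>k. (1 - \<i>) / 2 * bb A n m y k + (1 + \<i>) / 2 * bb A m n y k)"
    by (simp only: aa_def)
  also have "\<dots> = l2inner x (\<lambda>k. (1 - \<i>) / 2 * bb A n m y k) + l2inner x (\<lambda>k. (1 + \<i>) / 2 * bb A m n y k)"
    by (rule l2inner_add2[OF x ms(1) ms(2)])
  also have "\<dots> = (1 - \<i>) / 2 * l2inner x (bb A n m y) + (1 + \<i>) / 2 * l2inner x (bb A m n y)"
    by (simp only: l2inner_smult2[OF x m(1)] l2inner_smult2[OF x m(2)])
  also have "\<dots> = (1 - \<i>) / 2 * l2inner (bb A m n x) y + (1 + \<i>) / 2 * l2inner (bb A n m x) y"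
    using bb_herm[OF A N x y] bb_herm[OF A N x y, of m n] by simp
  also have "\<dots> = cnj ((1 - \<i>) / 2) * l2inner (bb A n m x) y + cnj ((1 + \<i>) / 2) * l2inner (bb A m n x) y"
    by (simp add: complex_eq_iff)
  also have "\<dots> = l2inner (\<lambda>k. (1 - \<i>) / 2 * bb A n m x k) y + l2inner (\<lambda>k. (1 + \<i>) / 2 * bb A m n x k) y"
    by (simp only: l2inner_smult1[OF m(1) y] l2inner_smult1[OF m(2) y])
  also have "\<dots> = l2inner (\<lambda>k. (1 - \<i>) / 2 * bb A n m x k + (1 + \<i>) / 2 * bb A m n x k) y"
    by (rule l2inner_add1[OF ms(1) ms(2) y, symmetric])
  also have "\<dots> = l2inner (aa A n m x) y"
    by (simp only: aa_def)
  finally show "l2inner x (aa A n m y) = l2inner (aa A n m x) y" .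
qed

lemma aa_diag: "aa A n n = bb A n n"
proof -
  have "(1 - \<i>) / 2 * z + (1 + \<i>) / 2 * z = z" for z :: complex by (simp add: complex_eq_iff field_simps)
  then show ?thesis by (simp add: aa_def fun_eq_iff)
qed

lemma bb_diag_quad: assumes A: "bounded_S2 A" and x: "x \<in> ell2"
  shows "l2inner x (bb A n n x) = hs_inner (zeta x n) (A (zeta x n))"
  using bb_quad[OF A x x] .

lemma zeta_nonzero: assumes x: "x \<in> ell2" "x \<noteq> (\<lambda>_. 0)" shows "zeta x n \<noteq> (\<lambda>_ _. 0)"
proof
  obtain j where j: "x j \<noteq> 0" using x(2) by auto
  assume "zeta x n = (\<lambda>_ _. 0)"
  then have "zeta x n (basis_e j) n = 0" by simp
  then show False using zeta_basis[OF x(1)] j by (simp add: basis_e_def)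
qed

lemma glb_bb: assumes A: "bounded_S2 A" and N: "nonneg_S2 A"
  shows "glb_S2 A \<le> glb_op (bb A n n)"
  unfolding glb_op_def
proof (rule cInf_greatest)
  show "(\<lambda>x. Re (l2inner x (bb A n n x))) ` {x \<in> ell2. l2norm x = 1} \<noteq> {}"
    using basis_ell2[of 0] by blast
next
  fix v assume "v \<in> (\<lambda>x. Re (l2inner x (bb A n n x))) ` {x \<in> ell2. l2norm x = 1}"
  then obtain x where x: "x \<in> ell2" "l2norm x = 1" and v: "v = Re (l2inner x (bb A n n x))" by blast
  have z: "zeta x n \<in> S2" "hs_norm (zeta x n) = 1" using zeta_S2[OF x(1)] x(2) by auto
  have mem: "v \<in> (\<lambda>\<eta>. Re (hs_inner \<eta> (A \<eta>))) ` {\<eta> \<in> S2. hs_norm \<eta> = 1}"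
    unfolding v bb_diag_quad[OF A x(1)] using z by blast
  have bdd: "bdd_below ((\<lambda>\<eta>. Re (hs_inner \<eta> (A \<eta>))) ` {\<eta> \<in> S2. hs_norm \<eta> = 1})"
    using N unfolding nonneg_S2_def bdd_below_def by (intro exI[of _ 0]) auto
  show "glb_S2 A \<le> v" unfolding glb_S2_def by (rule cInf_lower[OF mem bdd])
qed



definition Pn :: "nat \<Rightarrow> hop \<Rightarrow> hop" where
  "Pn N \<sigma> = (\<lambda>z k. if k < N then \<sigma> z k else 0)"

lemma Pn_trunc: "Pn N \<sigma> z = trunc N (\<sigma> z)"
  by (simp add: Pn_def trunc_def)

lemma tail_le: assumes v: "v \<in> ell2" shows "l2norm (\<lambda>k. trunc K v k - v k) \<le> l2norm v"
proof -
  have m: "(\<lambda>k. trunc K v k - v k) \<in> ell2" using ell2_diff[OF conjunct1[OF trunc_ell2] v] by blast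
  have le: "(cmod (trunc K v k - v k))\<^sup>2 \<le> (cmod (v k))\<^sup>2" for k by (simp add: trunc_def)
  have "(\<Sum>k. (cmod (trunc K v k - v k))\<^sup>2) \<le> (\<Sum>k. (cmod (v k))\<^sup>2)"
    using m v le by (intro suminf_le) (auto simp: ell2_iff)
  then show ?thesis unfolding l2norm_def by (rule real_sqrt_le_mono)
qed

lemma Pn_S2: assumes S: "\<sigma> \<in> S2" shows "Pn N \<sigma> \<in> S2 \<and> hs_norm (Pn N \<sigma>) \<le> hs_norm \<sigma>"
proof -
  have B: "bounded_op \<sigma>" using S2_bop[OF S] .
  obtain C where C: "C \<ge> 0" "\<forall>x\<in>ell2. l2norm (\<sigma> x) \<le> C * l2norm x" using bop_bound[OF B] by blast
  have bo: "bounded_op (Pn N \<sigma>)" unfolding bounded_op_def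
  proof (intro conjI ballI allI impI)
    fix x assume x: "x \<notin> ell2" then show "Pn N \<sigma> x = (\<lambda>_. 0)" using bop_out[OF B x] by (simp add: Pn_def fun_eq_iff)
  next
    fix x show "Pn N \<sigma> x \<in> ell2" unfolding Pn_trunc using trunc_ell2 by blast
  next
    fix x y assume "x \<in> ell2" "y \<in> ell2"
    then show "Pn N \<sigma> (\<lambda>k. x k + y k) = (\<lambda>k. Pn N \<sigma> x k + Pn N \<sigma> y k)"
      using bop_add[OF B] by (simp add: Pn_def fun_eq_iff)
  next
    fix x c assume "x \<in> ell2"
    then show "Pn N \<sigma> (\<lambda>k. c * x k) = (\<lambda>k. c * Pn N \<sigma> x k)"
      using bop_smult[OF B] by (simp add: Pn_def fun_eq_iff)
  next
    have "l2norm (Pn N \<sigma> x) \<le> C * l2norm x" if "x \<in> ell2" for x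
      unfolding Pn_trunc using trunc_le[OF bop_ell2[OF B]] C(2) that order_trans by blast
    then show "\<exists>C. \<forall>x\<in>ell2. l2norm (Pn N \<sigma> x) \<le> C * l2norm x" by blast
  qed
  have le: "(l2norm (Pn N \<sigma> (basis_e n)))\<^sup>2 \<le> (l2norm (\<sigma> (basis_e n)))\<^sup>2" for n
    unfolding Pn_trunc using trunc_le[OF bop_ell2[OF B]] l2norm_nonneg[OF conjunct1[OF trunc_ell2]]
    by (intro power_mono) auto
  have sm: "summable (\<lambda>n. (l2norm (Pn N \<sigma> (basis_e n)))\<^sup>2)"
    by (rule summable_comparison_test[OF _ S2_summ[OF S]]) (use le in auto)
  have "hs_norm (Pn N \<sigma>) \<le> hs_norm \<sigma>"
    unfolding hs_norm_def by (intro real_sqrt_le_mono suminf_le le sm S2_summ[OF S])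
  then show ?thesis using bo sm by (simp add: S2_def)
qed

lemma Pn_conv: assumes S: "\<tau> \<in> S2" shows "(\<lambda>N. hs_norm (\<lambda>z k. Pn N \<tau> z k - \<tau> z k)) \<longlonglongrightarrow> 0"
proof -
  have B: "bounded_op \<tau>" using S2_bop[OF S] .
  define a where "a j N = (l2norm (\<lambda>k. trunc N (\<tau> (basis_e j)) k - \<tau> (basis_e j) k))\<^sup>2" for j N
  have lim: "(\<lambda>N. a j N) \<longlonglongrightarrow> 0" for j
    unfolding a_def using tendsto_power[OF tail_tendsto[OF bop_ell2[OF B]], where n=2] by simp
  have bd: "norm (a j N) \<le> (l2norm (\<tau> (basis_e j)))\<^sup>2" for j N
  proof -
    have m: "(\<lambda>k. trunc N (\<tau> (basis_e j)) k - \<tau> (basis_e j) k) \<in> ell2"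
      using ell2_diff[OF conjunct1[OF trunc_ell2] bop_ell2[OF B]] by blast
    show ?thesis unfolding a_def using tail_le[OF bop_ell2[OF B]] l2norm_nonneg[OF m]
      by (simp add: power_mono)
  qed
  have "((\<lambda>N. \<Sum>j. a j N) \<longlonglongrightarrow> (\<Sum>j. (0::real)))"
    using tannerys_theorem[where a=a and b="\<lambda>_. 0" and M="\<lambda>j. (l2norm (\<tau> (basis_e j)))\<^sup>2" and F=sequentially]
      lim bd S2_summ[OF S] by (auto intro: always_eventually)
  then have "((\<lambda>N. sqrt (\<Sum>j. a j N)) \<longlonglongrightarrow> sqrt 0)" by (intro tendsto_real_sqrt) simp
  moreover have "hs_norm (\<lambda>z k. Pn N \<tau> z k - \<tau> z k) = sqrt (\<Sum>j. a j N)" for N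
    unfolding hs_norm_def a_def Pn_trunc ..
  ultimately show ?thesis by simp
qed



lemma eps_eval: "w \<in> ell2 \<Longrightarrow> eps n m w k = w m * basis_e n k"
  by (simp add: eps_def l2inner_basis)

lemma sum_basis: "(\<Sum>n<N. f n * basis_e n k) = (if k < N then f k else 0)"
proof -
  have "trunc N f k = (\<Sum>n<N. f n * basis_e n k)" by (simp add: trunc_sum)
  then show ?thesis by (simp add: trunc_def)
qed

lemma Sig_eval: assumes A: "bounded_S2 A" and S: "\<eta> \<in> S2"
  shows "(\<Sum>n<N. \<Sum>m<N. epshat n m (\<eta> (aa A n m (basis_e j))) k) =
         (if k < N then (\<Sum>m<N. \<eta> (bb A k m (basis_e j)) m) else 0)"
proof -
  have B: "bounded_op \<eta>" using S2_bop[OF S] .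
  define W where "W n m = \<eta> (aa A n m (basis_e j))" for n m
  define c1 where "c1 = (1 + \<i>) / 2"
  define c2 where "c2 = (1 - \<i>) / 2"
  have W: "W n m \<in> ell2" for n m unfolding W_def using bop_ell2[OF B] .
  have "(\<Sum>n<N. \<Sum>m<N. epshat n m (\<eta> (aa A n m (basis_e j))) k) =
        (\<Sum>n<N. \<Sum>m<N. c1 * (W n m m * basis_e n k) + c2 * (W n m n * basis_e m k))"
    unfolding epshat_def W_def[symmetric] c1_def c2_def using W by (simp add: eps_eval)
  also have "\<dots> = (\<Sum>n<N. \<Sum>m<N. c1 * (W n m m * basis_e n k)) + (\<Sum>n<N. \<Sum>m<N. c2 * (W n m n * basis_e m k))"
    by (simp only: sum.distrib)
  also have "(\<Sum>n<N. \<Sum>m<N. c1 * (W n m m * basis_e n k)) = (\<Sum>n<N. (\<Sum>m<N. c1 * W n m m) * basis_e n k)"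
    by (simp add: sum_distrib_right mult.assoc)
  also have "(\<Sum>n<N. \<Sum>m<N. c2 * (W n m n * basis_e m k)) = (\<Sum>m<N. (\<Sum>n<N. c2 * W n m n) * basis_e m k)"
    by (subst sum.swap) (simp add: sum_distrib_right mult.assoc)
  finally have e1: "(\<Sum>n<N. \<Sum>m<N. epshat n m (\<eta> (aa A n m (basis_e j))) k) =
      (if k < N then (\<Sum>m<N. c1 * W k m m) + (\<Sum>n<N. c2 * W n k n) else 0)"
    by (simp add: sum_basis)
  have e2: "c1 * W k m m + c2 * W m k m = \<eta> (bb A k m (basis_e j)) m" for m
  proof -
    have a1: "aa A k m (basis_e j) \<in> ell2" "aa A m k (basis_e j) \<in> ell2" using bop_ell2[OF aa_bop[OF A]] by auto
    have a2: "(\<lambda>l. c1 * aa A k m (basis_e j) l) \<in> ell2" "(\<lambda>l. c2 * aa A m k (basis_e j) l) \<in> ell2"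
      using ell2_smult[OF a1(1)] ell2_smult[OF a1(2)] by auto
    have fe: "(\<lambda>l. c1 * aa A k m (basis_e j) l + c2 * aa A m k (basis_e j) l) = bb A k m (basis_e j)"
      unfolding aa_def c1_def c2_def by (rule ext) (simp add: complex_eq_iff field_simps)
    have "\<eta> (\<lambda>l. c1 * aa A k m (basis_e j) l + c2 * aa A m k (basis_e j) l) =
          (\<lambda>l. c1 * \<eta> (aa A k m (basis_e j)) l + c2 * \<eta> (aa A m k (basis_e j)) l)"
      using bop_add[OF B a2] bop_smult[OF B a1(1)] bop_smult[OF B a1(2)] by simp
    then show ?thesis unfolding fe W_def by (simp add: fun_eq_iff)
  qed
  show ?thesis unfolding e1 using e2 by (simp add: sum.distrib[symmetric])
qed

definition xrow :: "hop \<Rightarrow> nat \<Rightarrow> (nat \<Rightarrow> complex)" where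
  "xrow \<eta> m = (\<lambda>l. cnj (\<eta> (basis_e l) m))"

lemma xrow_ell2: assumes S: "\<eta> \<in> S2" shows "xrow \<eta> m \<in> ell2"
proof -
  have le: "(cmod (xrow \<eta> m l))\<^sup>2 \<le> (l2norm (\<eta> (basis_e l)))\<^sup>2" for l
    unfolding xrow_def using ell2_comp_le[OF bop_ell2[OF S2_bop[OF S]]]
    by (simp add: power_mono)
  show ?thesis unfolding ell2_iff
    by (rule summable_comparison_test[OF _ S2_summ[OF S]]) (use le in auto)
qed

lemma xrow_inner: assumes S: "\<eta> \<in> S2" and v: "v \<in> ell2" shows "l2inner (xrow \<eta> m) v = \<eta> v m"
proof -
  have "(\<lambda>l. v l * \<eta> (basis_e l) m) sums \<eta> v m" using bop_expand[OF S2_bop[OF S] v] .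
  moreover have "(\<lambda>l. v l * \<eta> (basis_e l) m) = (\<lambda>l. cnj (xrow \<eta> m l) * v l)"
    by (simp add: xrow_def fun_eq_iff mult.commute)
  ultimately show ?thesis unfolding l2inner_def by (simp add: sums_iff)
qed

lemma zeta_xrow: assumes S: "\<eta> \<in> S2" shows "zeta (xrow \<eta> m) m = (\<lambda>z k. if k = m then \<eta> z m else 0)"
proof (intro ext)
  fix z k show "zeta (xrow \<eta> m) m z k = (if k = m then \<eta> z m else 0)"
  proof (cases "z \<in> ell2")
    case True then show ?thesis using xrow_inner[OF S True] by (simp add: zeta_def basis_e_def)
  next
    case False then show ?thesis using bop_out[OF S2_bop[OF S] False] by (simp add: zeta_def)
  qed
qed

lemma Pn_sum: assumes S: "\<eta> \<in> S2" shows "Pn N \<eta> = (\<lambda>z k. \<Sum>m<N. 1 * zeta (xrow \<eta> m) m z k)"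
  unfolding zeta_xrow[OF S] by (simp add: Pn_def fun_eq_iff)

lemma Sig_Pn: assumes A: "bounded_S2 A" and S: "\<eta> \<in> S2"
  shows "(\<Sum>n<N. \<Sum>m<N. epshat n m (\<eta> (aa A n m (basis_e j))) k) = Pn N (A (Pn N \<eta>)) (basis_e j) k"
proof -
  have e: "\<eta> (bb A k m (basis_e j)) m = A (zeta (xrow \<eta> m) m) (basis_e j) k" for m
    using xrow_inner[OF S bop_ell2[OF bb_bop[OF A]]] K_inner[OF A xrow_ell2[OF S] basis_ell2(1)] by metis
  have "A (Pn N \<eta>) = (\<lambda>z k. \<Sum>m<N. 1 * A (zeta (xrow \<eta> m) m) z k)"
    unfolding Pn_sum[OF S] using A_sum[OF A, of "{..<N}" "\<lambda>m. zeta (xrow \<eta> m) m" "\<lambda>_. 1"]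
      zeta_S2[OF xrow_ell2[OF S]] by simp
  then show ?thesis unfolding Sig_eval[OF A S] e by (simp add: Pn_def)
qed

lemma hs_norm_cong: "(\<And>j. \<sigma> (basis_e j) = \<tau> (basis_e j)) \<Longrightarrow> hs_norm \<sigma> = hs_norm \<tau>"
  by (simp add: hs_norm_def)

lemma representation: assumes A: "bounded_S2 A" and S: "\<eta> \<in> S2"
  shows "(\<lambda>N. hs_norm (\<lambda>x k. (\<Sum>n<N. \<Sum>m<N. epshat n m (\<eta> (aa A n m x)) k) - A \<eta> x k)) \<longlonglongrightarrow> 0"
proof -
  obtain C where C: "C \<ge> 0" "\<forall>\<eta>\<in>S2. hs_norm (A \<eta>) \<le> C * hs_norm \<eta>" using A_bound[OF A] by blast
  have AS: "A \<eta> \<in> S2" using A_S2[OF A S] .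
  have PS: "Pn N \<eta> \<in> S2" for N using Pn_S2[OF S] by blast
  have APS: "A (Pn N \<eta>) \<in> S2" for N using A_S2[OF A PS] .
  define D where "D N = (\<lambda>z k. A (Pn N \<eta>) z k - A \<eta> z k)" for N
  have DS: "D N \<in> S2" for N unfolding D_def using S2_diff[OF APS AS] .
  have DA: "D N = A (\<lambda>z k. Pn N \<eta> z k - \<eta> z k)" for N unfolding D_def using A_diff[OF A PS S] by simp
  have PDS: "(\<lambda>z k. Pn N \<eta> z k - \<eta> z k) \<in> S2" for N using S2_diff[OF PS S] .
  have QS: "(\<lambda>z k. Pn N (A \<eta>) z k - A \<eta> z k) \<in> S2" for N using S2_diff[OF conjunct1[OF Pn_S2[OF AS]] AS] .
  have eq: "hs_norm (\<lambda>x k. (\<Sum>n<N. \<Sum>m<N. epshat n m (\<eta> (aa A n m x)) k) - A \<eta> x k)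
      = hs_norm (\<lambda>z k. Pn N (D N) z k + (\<lambda>z k. Pn N (A \<eta>) z k - A \<eta> z k) z k)" for N
    by (rule hs_norm_cong) (simp add: Sig_Pn[OF A S] Pn_def D_def fun_eq_iff)
  have bound: "hs_norm (\<lambda>z k. Pn N (D N) z k + (\<lambda>z k. Pn N (A \<eta>) z k - A \<eta> z k) z k)
     \<le> C * hs_norm (\<lambda>z k. Pn N \<eta> z k - \<eta> z k) + hs_norm (\<lambda>z k. Pn N (A \<eta>) z k - A \<eta> z k)" for N
  proof -
    have "hs_norm (\<lambda>z k. Pn N (D N) z k + (\<lambda>z k. Pn N (A \<eta>) z k - A \<eta> z k) z k)
        \<le> hs_norm (Pn N (D N)) + hs_norm (\<lambda>z k. Pn N (A \<eta>) z k - A \<eta> z k)"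
      using S2_add[OF conjunct1[OF Pn_S2[OF DS]] QS] by simp
    also have "hs_norm (Pn N (D N)) \<le> hs_norm (D N)" using Pn_S2[OF DS] by blast
    also have "hs_norm (D N) \<le> C * hs_norm (\<lambda>z k. Pn N \<eta> z k - \<eta> z k)" unfolding DA using C(2) PDS by blast
    finally show ?thesis by simp
  qed
  have nn: "0 \<le> hs_norm (\<lambda>z k. Pn N (D N) z k + (\<lambda>z k. Pn N (A \<eta>) z k - A \<eta> z k) z k)" for N
    using hs_norm_nonneg[OF conjunct1[OF S2_add[OF conjunct1[OF Pn_S2[OF DS]] QS]]] by simp
  have lim: "(\<lambda>N. C * hs_norm (\<lambda>z k. Pn N \<eta> z k - \<eta> z k) + hs_norm (\<lambda>z k. Pn N (A \<eta>) z k - A \<eta> z k)) \<longlonglongrightarrow> C * 0 + 0"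
    by (intro tendsto_add tendsto_mult tendsto_const Pn_conv S AS)
  show ?thesis unfolding eq
    by (rule tendsto_sandwich[where f="\<lambda>_. 0", OF _ _ tendsto_const]) (use nn bound lim in auto)
qed


theorem proposition3p14:
  fixes A :: sop
  assumes "bounded_S2 A" and "nonneg_S2 A"
  shows "\<exists>a :: nat \<Rightarrow> nat \<Rightarrow> hop.
           (\<forall>n m. bounded_op (a n m) \<and> selfadjoint_op (a n m)) \<and>
           (\<forall>\<eta>\<in>S2. (\<lambda>N. hs_norm (\<lambda>x k. (\<Sum>n<N. \<Sum>m<N. epshat n m (\<eta> (a n m x)) k) - A \<eta> x k))
                        \<longlonglongrightarrow> 0) \<and>
           (\<forall>n. nonneg_op (a n n)) \<and>
           (positive_S2 A \<longrightarrow> (\<forall>n. positive_op (a n n))) \<and>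
           (posdef_S2 A \<longrightarrow> (\<forall>n. posdef_op (a n n))) \<and>
           (\<forall>n. glb_op (a n n) \<ge> glb_S2 A)"
proof (intro exI[of _ "aa A"] conjI allI ballI impI)
  note A = assms(1) and N = assms(2)
  fix n m show "bounded_op (aa A n m)" using aa_bop[OF A] .
  show "selfadjoint_op (aa A n m)" using aa_sa[OF A N] .
next
  fix \<eta> assume "\<eta> \<in> S2"
  then show "(\<lambda>N. hs_norm (\<lambda>x k. (\<Sum>n<N. \<Sum>m<N. epshat n m (\<eta> (aa A n m x)) k) - A \<eta> x k)) \<longlonglongrightarrow> 0"
    using representation[OF assms(1)] by blast
next
  fix n
  show "nonneg_op (aa A n n)" unfolding nonneg_op_def aa_diag
  proof
    fix x assume x: "x \<in> ell2"
    show "Im (l2inner x (bb A n n x)) = 0 \<and> 0 \<le> Re (l2inner x (bb A n n x))"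
      unfolding bb_diag_quad[OF assms(1) x] using assms(2) zeta_S2[OF x] by (simp add: nonneg_S2_def)
  qed
next
  fix n assume P: "positive_S2 A"
  show "positive_op (aa A n n)" unfolding positive_op_def aa_diag
  proof (intro ballI impI)
    fix x assume x: "x \<in> ell2" and nz: "x \<noteq> (\<lambda>_. 0)"
    show "Im (l2inner x (bb A n n x)) = 0 \<and> 0 < Re (l2inner x (bb A n n x))"
      unfolding bb_diag_quad[OF assms(1) x] using P zeta_S2[OF x] zeta_nonzero[OF x nz, of n]
      by (simp add: positive_S2_def)
  qed
next
  fix n assume P: "posdef_S2 A"
  show "posdef_op (aa A n n)" unfolding posdef_op_def aa_diag
    using glb_bb[OF assms, of n] P by (simp add: posdef_S2_def)
next
  fix n show "glb_S2 A \<le> glb_op (aa A n n)" unfolding aa_diag using glb_bb[OF assms] .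
qed

end
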